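(* Let $(\mathbf Z_n,\mathbf A_{n\times n})$ be generated from the stochastic block model with parameters $(\pi,\rho_nS)$, with $n\rho_n\to\infty$. Then for all $\delta>0$, \[ \sup_{a,b\in[k]}\bigl|\hat P_{ab}(\mathbf A_{n\times n}\mid\mathbf Z_n)-\rho_nS_{ab}\bigr|<\frac{\sqrt{\delta\rho_n\log n}}{n} \] with probability converging to $1$ as $n\to\infty$. Moreover, for all $\alpha>0$ and all $\delta<s_{\min}/2$, if $n\rho_n>\frac{4s_{\max}}{\alpha^2\delta^2}$, then \[ \sup_{a,b\in[k]}\ \sup_{\mathbf e_n\in\mathcal F(n,\alpha)}\bigl|\hat P_{ab}(\mathbf A_{n\times n}\mid\mathbf e_n)-[P_{R(\mathbf e_n,\mathbf Z_n)}]_{ab}\bigr|<\delta\rho_n \] eventually almost surely as $n\to\infty$.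
   Context: SBM with parameters $(\pi,\rho_nS)$: $k\ge2$ fixed; $\pi$ a probability vector on $[k]$ with all $\pi_a>0$; $S$ a fixed symmetric $k\times k$ matrix with strictly positive entries and no two identical columns, $s_{\min},s_{\max}$ its minimal and maximal entries; $\rho_n\to0$; $P=\rho_nS$. $\mathbf Z_n$ i.i.d. with law $\pi$; given $\mathbf Z_n=\mathbf z_n$, $\mathbf A_{n\times n}$ symmetric, zero diagonal, $A_{ij}$ ($i<j$) independent Bernoulli$(P_{z_iz_j})$. For $\mathbf e_n\in[k]^n$: $n_a(\mathbf e_n)=\#\{i:e_i=a\}$; $n_{ab}=n_an_b$ ($a\ne b$), $n_{aa}=n_a(n_a-1)$; $o_{ab}(\mathbf e_n)=\sum_{i,j}\mathbf 1\{e_i=a,e_j=b\}A_{ij}$; $\hat P_{ab}(\mathbf A_{n\times n}\mid\mathbf e_n)=o_{ab}(\mathbf e_n)/n_{ab}(\mathbf e_n)$. $\mathcal F(n,\alpha)=\{\mathbf e_n:n_a(\mathbf e_n)\ge\alpha n\ \forall a\}$. Confusion matrix: $R_{ab}(\mathbf e_n,\mathbf z_n)=\frac1n\sum_i\mathbf 1\{e_i=a,z_i=b\}$. For a nonnegative $k\times k$ matrix $R$, with $\mathbf 1$ the all-ones vector and $\delta_{ab}=\mathbf 1\{a=b\}$: $[P_R]_{ab}=\dfrac{[RPR^T]_{ab}-\delta_{ab}\sum_{i=1}^kP_{ii}R_{ai}/n}{[R\mathbf 1]_a([R\mathbf 1]_b-\delta_{ab}/n)}$; equivalently $n_{ab}(\mathbf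 e_n)[P_{R(\mathbf e_n,\mathbf z_n)}]_{ab}=\mathbb E(o_{ab}(\mathbf e_n)\mid\mathbf Z_n=\mathbf z_n)$. *)

theory Defs
  imports "HOL-Probability.Probability"
begin

text \<open>Nodes are 0..n-1, communities are 0..k-1. Matrices are functions nat => nat => real.\<close>

definition s_min :: "nat \<Rightarrow> (nat \<Rightarrow> nat \<Rightarrow> real) \<Rightarrow> real" where
  "s_min k S = Min {S a b | a b. a < k \<and> b < k}"

definition s_max :: "nat \<Rightarrow> (nat \<Rightarrow> nat \<Rightarrow> real) \<Rightarrow> real" where
  "s_max k S = Max {S a b | a b. a < k \<and> b < k}"

definition comm_pmf :: "nat \<Rightarrow> (nat \<Rightarrow> real) \<Rightarrow> nat pmf" where
  "comm_pmf k \<pi> = embed_pmf (\<lambda>a. if a < k then \<pi> a else 0)"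

definition symm_adj :: "(nat \<times> nat \<Rightarrow> bool) \<Rightarrow> nat \<Rightarrow> nat \<Rightarrow> bool" where
  "symm_adj B i j = (if i < j then B (i, j) else if j < i then B (j, i) else False)"

definition sbm_pmf ::
  "nat \<Rightarrow> (nat \<Rightarrow> real) \<Rightarrow> (nat \<Rightarrow> nat \<Rightarrow> real) \<Rightarrow> (nat \<Rightarrow> real) \<Rightarrow> nat
     \<Rightarrow> ((nat \<Rightarrow> nat) \<times> (nat \<Rightarrow> nat \<Rightarrow> bool)) pmf" where
  "sbm_pmf k \<pi> S \<rho> n =
     bind_pmf (Pi_pmf {..<n} 0 (\<lambda>_. comm_pmf k \<pi>))
       (\<lambda>z. map_pmf (\<lambda>B. (z, symm_adj B))
              (Pi_pmf {(i, j). i < j \<and> j < n} False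
                 (\<lambda>(i, j). bernoulli_pmf (\<rho> n * S (z i) (z j)))))"

definition n_a :: "nat \<Rightarrow> (nat \<Rightarrow> nat) \<Rightarrow> nat \<Rightarrow> nat" where
  "n_a n e a = card {i. i < n \<and> e i = a}"

definition n_ab :: "nat \<Rightarrow> (nat \<Rightarrow> nat) \<Rightarrow> nat \<Rightarrow> nat \<Rightarrow> real" where
  "n_ab n e a b = (if a \<noteq> b then real (n_a n e a) * real (n_a n e b)
                   else real (n_a n e a) * (real (n_a n e a) - 1))"

definition o_ab :: "nat \<Rightarrow> (nat \<Rightarrow> nat \<Rightarrow> bool) \<Rightarrow> (nat \<Rightarrow> nat) \<Rightarrow> nat \<Rightarrow> nat \<Rightarrow> real" where
  "o_ab n A e a b = (\<Sum>i<n. \<Sum>j<n. if e i = a \<and> e j = b \<and> A i j then 1 else 0)"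

definition P_hat :: "nat \<Rightarrow> (nat \<Rightarrow> nat \<Rightarrow> bool) \<Rightarrow> (nat \<Rightarrow> nat) \<Rightarrow> nat \<Rightarrow> nat \<Rightarrow> real" where
  "P_hat n A e a b = o_ab n A e a b / n_ab n e a b"

definition F_set :: "nat \<Rightarrow> nat \<Rightarrow> real \<Rightarrow> (nat \<Rightarrow> nat) set" where
  "F_set k n \<alpha> = {e \<in> {..<n} \<rightarrow>\<^sub>E {..<k}. \<forall>a<k. real (n_a n e a) \<ge> \<alpha> * real n}"

definition confusion :: "nat \<Rightarrow> (nat \<Rightarrow> nat) \<Rightarrow> (nat \<Rightarrow> nat) \<Rightarrow> nat \<Rightarrow> nat \<Rightarrow> real" where
  "confusion n e z a b = real (card {i. i < n \<and> e i = a \<and> z i = b}) / real n"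

definition P_R :: "nat \<Rightarrow> nat \<Rightarrow> (nat \<Rightarrow> nat \<Rightarrow> real) \<Rightarrow> (nat \<Rightarrow> nat \<Rightarrow> real) \<Rightarrow> nat \<Rightarrow> nat \<Rightarrow> real" where
  "P_R k n P R a b =
     ((\<Sum>c<k. \<Sum>d<k. R a c * P c d * R b d)
        - (if a = b then (\<Sum>i<k. P i i * R a i) / real n else 0))
     / ((\<Sum>c<k. R a c) * ((\<Sum>c<k. R b c) - (if a = b then 1 / real n else 0)))"

end

theory Submission
  imports Defs
begin

lemma exp_quad_bound:
  fixes c :: real assumes "\<bar>c\<bar> \<le> 1" shows "exp c \<le> 1 + c + c\<^sup>2"
proof (cases "c \<ge> 0")
  case True then show ?thesis using exp_bound[of c] assms by auto
next
  case False
  define y where "y = - c"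
  have y: "0 < y" "y \<le> 1" using False assms by (auto simp: y_def)
  have "exp y \<ge> 1 + y" by (rule exp_ge_add_one_self)
  hence "exp (-y) \<le> 1 / (1 + y)" using y by (simp add: exp_minus field_simps)
  also have "\<dots> \<le> 1 - y + y\<^sup>2"
  proof -
    have "(1 - y + y\<^sup>2) * (1 + y) = 1 + y^3" by (simp add: algebra_simps power2_eq_square power3_eq_cube)
    moreover have "y^3 \<ge> 0" using y by simp
    ultimately show ?thesis using y by (simp add: field_simps)
  qed
  finally show ?thesis by (simp add: y_def)
qed

lemma pmf_integrable_bounded:
  fixes f :: "'a \<Rightarrow> real"
  assumes "\<And>x. x \<in> set_pmf p \<Longrightarrow> \<bar>f x\<bar> \<le> B"
  shows "integrable (measure_pmf p) f"
  by (rule measure_pmf.integrable_const_bound[where B=B]) (auto intro!: AE_pmfI assms)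

lemma chernoff_Pi:
  fixes I :: "'i set" and q :: "'i \<Rightarrow> 'b pmf" and g :: "'i \<Rightarrow> 'b \<Rightarrow> real" and c r :: real
  assumes fin: "finite I" and c: "\<bar>c\<bar> \<le> 1/2"
    and g: "\<And>i x. i \<in> I \<Longrightarrow> x \<in> set_pmf (q i) \<Longrightarrow> 0 \<le> g i x \<and> g i x \<le> 2"
  shows "measure_pmf.prob (Pi_pmf I d q)
           {y. c * ((\<Sum>i\<in>I. g i (y i)) - (\<Sum>i\<in>I. measure_pmf.expectation (q i) (g i))) \<ge> r}
         \<le> exp (c\<^sup>2 * (\<Sum>i\<in>I. measure_pmf.expectation (q i) (\<lambda>x. (g i x)\<^sup>2)) - r)"
proof -
  define E where "E i = measure_pmf.expectation (q i) (g i)" for i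
  define E2 where "E2 i = measure_pmf.expectation (q i) (\<lambda>x. (g i x)\<^sup>2)" for i
  define \<mu> where "\<mu> = (\<Sum>i\<in>I. E i)"
  define V where "V = (\<Sum>i\<in>I. E2 i)"
  have int_g: "integrable (measure_pmf (q i)) (g i)" if "i \<in> I" for i
    by (rule pmf_integrable_bounded[where B=2]) (use g that in force)
  have int_g2: "integrable (measure_pmf (q i)) (\<lambda>x. (g i x)\<^sup>2)" if "i \<in> I" for i
  proof (rule pmf_integrable_bounded[where B=4])
    fix x assume x: "x \<in> set_pmf (q i)"
    have "(g i x)\<^sup>2 \<le> 2\<^sup>2" using g[OF that x] by (intro power_mono) auto
    thus "\<bar>(g i x)\<^sup>2\<bar> \<le> 4" by simp
  qed
  have int_e: "integrable (measure_pmf (q i)) (\<lambda>x. exp (c * g i x))" if "i \<in> I" for i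
  proof (rule pmf_integrable_bounded[where B="exp 1"])
    fix x assume x: "x \<in> set_pmf (q i)"
    have "\<bar>c * g i x\<bar> = \<bar>c\<bar> * g i x" using g[OF that x] by (simp add: abs_mult)
    also have "\<dots> \<le> 1/2 * 2" using g[OF that x] c by (intro mult_mono) auto
    finally have "c * g i x \<le> 1" by simp
    thus "\<bar>exp (c * g i x)\<bar> \<le> exp 1" by simp
  qed
  have h1: "measure_pmf.expectation (q i) (\<lambda>x. exp (c * g i x)) \<le> exp (c * E i + c\<^sup>2 * E2 i)"
    if i: "i \<in> I" for i
  proof -
    have "measure_pmf.expectation (q i) (\<lambda>x. exp (c * g i x))
          \<le> measure_pmf.expectation (q i) (\<lambda>x. 1 + c * g i x + c\<^sup>2 * (g i x)\<^sup>2)"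
    proof (rule integral_mono_AE)
      show "integrable (measure_pmf (q i)) (\<lambda>x. 1 + c * g i x + c\<^sup>2 * (g i x)\<^sup>2)"
        using int_g[OF i] int_g2[OF i] by auto
      show "AE x in measure_pmf (q i). exp (c * g i x) \<le> 1 + c * g i x + c\<^sup>2 * (g i x)\<^sup>2"
      proof (rule AE_pmfI)
        fix x assume x: "x \<in> set_pmf (q i)"
        have "\<bar>c * g i x\<bar> = \<bar>c\<bar> * g i x" using g[OF i x] by (simp add: abs_mult)
        also have "\<dots> \<le> 1/2 * 2" using g[OF i x] c by (intro mult_mono) auto
        finally have "\<bar>c * g i x\<bar> \<le> 1" by simp
        from exp_quad_bound[OF this] show "exp (c * g i x) \<le> 1 + c * g i x + c\<^sup>2 * (g i x)\<^sup>2"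
          by (simp add: power_mult_distrib)
      qed
    qed (use int_e[OF i] in auto)
    also have "\<dots> = 1 + c * E i + c\<^sup>2 * E2 i"
      using int_g[OF i] int_g2[OF i] by (simp add: E_def E2_def)
    also have "\<dots> \<le> exp (c * E i + c\<^sup>2 * E2 i)"
      using exp_ge_add_one_self[of "c * E i + c\<^sup>2 * E2 i"] by linarith
    finally show ?thesis .
  qed
  define u where "u y = exp (- c * \<mu>) * (\<Prod>i\<in>I. exp (c * g i (y i)))" for y :: "'i \<Rightarrow> 'b"
  have u_eq: "u y = exp (c * ((\<Sum>i\<in>I. g i (y i)) - \<mu>))" for y
  proof -
    have "(\<Prod>i\<in>I. exp (c * g i (y i))) = exp (c * (\<Sum>i\<in>I. g i (y i)))"
      using fin by (simp add: exp_sum sum_distrib_left)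
    then show ?thesis by (simp add: u_def exp_add[symmetric] algebra_simps)
  qed
  have int_u: "integrable (measure_pmf (Pi_pmf I d q)) u"
    unfolding u_def by (intro integrable_mult_right integrable_prod_Pi_pmf fin int_e)
  have Eu: "measure_pmf.expectation (Pi_pmf I d q) u
        = exp (- c * \<mu>) * (\<Prod>i\<in>I. measure_pmf.expectation (q i) (\<lambda>x. exp (c * g i x)))"
    unfolding u_def by (subst integral_mult_right_zero, subst expectation_prod_Pi_pmf) (use fin int_e in auto)
  also have "\<dots> \<le> exp (- c * \<mu>) * (\<Prod>i\<in>I. exp (c * E i + c\<^sup>2 * E2 i))"
    by (intro mult_left_mono prod_mono conjI h1 integral_nonneg_AE AE_pmfI) auto
  also have "\<dots> = exp (c\<^sup>2 * V)"
  proof -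
    have "(\<Prod>i\<in>I. exp (c * E i + c\<^sup>2 * E2 i)) = exp (c * \<mu> + c\<^sup>2 * V)"
    proof -
      have "c * \<mu> + c\<^sup>2 * V = (\<Sum>i\<in>I. c * E i + c\<^sup>2 * E2 i)"
        by (simp add: \<mu>_def V_def sum.distrib sum_distrib_left)
      then show ?thesis using fin by (simp add: exp_sum)
    qed
    then show ?thesis by (simp add: exp_add[symmetric] algebra_simps)
  qed
  finally have Eu_le: "measure_pmf.expectation (Pi_pmf I d q) u \<le> exp (c\<^sup>2 * V)" .
  have "measure_pmf.prob (Pi_pmf I d q) {y. c * ((\<Sum>i\<in>I. g i (y i)) - \<mu>) \<ge> r}
        \<le> measure_pmf.prob (Pi_pmf I d q) {y \<in> space (measure_pmf (Pi_pmf I d q)). u y \<ge> exp r}"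
    by (intro measure_pmf.finite_measure_mono) (auto simp: u_eq)
  also have "\<dots> \<le> measure_pmf.expectation (Pi_pmf I d q) u / exp r"
    by (intro integral_Markov_inequality_measure int_u) (auto simp: u_def intro!: AE_pmfI mult_nonneg_nonneg prod_nonneg)
  also have "\<dots> \<le> exp (c\<^sup>2 * V) / exp r"
    by (intro divide_right_mono Eu_le) auto
  also have "\<dots> = exp (c\<^sup>2 * V - r)" by (simp add: exp_diff)
  finally show ?thesis by (simp add: \<mu>_def V_def E_def E2_def)
qed


definition pairs :: "nat \<Rightarrow> (nat \<times> nat) set" where
  "pairs n = {(i, j). i < j \<and> j < n}"

lemma finite_pairs [simp]: "finite (pairs n)"
proof -
  have "pairs n \<subseteq> {..<n} \<times> {..<n}" by (auto simp: pairs_def)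
  thus ?thesis by (rule finite_subset) auto
qed

lemma pairs_Suc: "pairs (Suc n) = pairs n \<union> (\<lambda>i. (i, n)) ` {..<n}"
  by (auto simp: pairs_def less_Suc_eq)

lemma sum_split_square:
  fixes f :: "nat \<Rightarrow> nat \<Rightarrow> real"
  shows "(\<Sum>i<n. \<Sum>j<n. f i j) = (\<Sum>(i,j)\<in>pairs n. f i j + f j i) + (\<Sum>i<n. f i i)"
proof (induction n)
  case 0 then show ?case by (simp add: pairs_def)
next
  case (Suc n)
  have disj: "pairs n \<inter> (\<lambda>i. (i, n)) ` {..<n} = {}" by (auto simp: pairs_def)
  have inj: "inj_on (\<lambda>i. (i, n)) {..<n}" by (auto simp: inj_on_def)
  have "(\<Sum>(i,j)\<in>pairs (Suc n). f i j + f j i)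
        = (\<Sum>(i,j)\<in>pairs n. f i j + f j i) + (\<Sum>(i,j)\<in>(\<lambda>i. (i, n)) ` {..<n}. f i j + f j i)"
    unfolding pairs_Suc by (rule sum.union_disjoint) (use disj in auto)
  also have "(\<Sum>(i,j)\<in>(\<lambda>i. (i, n)) ` {..<n}. f i j + f j i) = (\<Sum>i<n. f i n + f n i)"
    by (subst sum.reindex[OF inj]) auto
  finally have P: "(\<Sum>(i,j)\<in>pairs (Suc n). f i j + f j i)
      = (\<Sum>(i,j)\<in>pairs n. f i j + f j i) + (\<Sum>i<n. f i n) + (\<Sum>i<n. f n i)"
    by (simp add: sum.distrib)
  have L: "(\<Sum>i<Suc n. \<Sum>j<Suc n. f i j) = (\<Sum>i<n. \<Sum>j<n. f i j) + (\<Sum>i<n. f i n) + (\<Sum>j<n. f n j) + f n n"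
    by (simp add: sum.distrib)
  have D: "(\<Sum>i<Suc n. f i i) = (\<Sum>i<n. f i i) + f n n" by simp
  show ?case using Suc.IH P L D by linarith
qed

definition wt :: "(nat \<Rightarrow> nat) \<Rightarrow> nat \<Rightarrow> nat \<Rightarrow> nat \<times> nat \<Rightarrow> real" where
  "wt e a b p = (if e (fst p) = a \<and> e (snd p) = b then 1 else 0) + (if e (snd p) = a \<and> e (fst p) = b then 1 else 0)"

lemma ind2_range:
  fixes P Q :: bool
  shows "0 \<le> (if P then 1 else 0) + (if Q then 1 else 0 :: real)
     \<and> (if P then 1 else 0) + (if Q then 1 else 0 :: real) \<le> 2
     \<and> ((if P then 1 else 0) + (if Q then 1 else 0 :: real))\<^sup>2 \<le> 2 * ((if P then 1 else 0) + (if Q then 1 else 0 :: real))"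
  by (cases P; cases Q) (simp_all add: power2_eq_square)

lemma wt_range: "wt e a b p \<ge> 0 \<and> wt e a b p \<le> 2 \<and> (wt e a b p)\<^sup>2 \<le> 2 * wt e a b p"
  unfolding wt_def by (rule ind2_range)

lemma ind2_mult:
  fixes P Q X :: bool
  shows "(if P \<and> X then 1 else 0) + (if Q \<and> X then 1 else 0 :: real)
       = ((if P then 1 else 0) + (if Q then 1 else 0)) * (if X then 1 else 0)"
  by (cases P; cases Q; cases X) simp_all

lemma o_ab_pairs:
  "o_ab n (symm_adj B) e a b = (\<Sum>p\<in>pairs n. wt e a b p * (if B p then 1 else 0))"
proof -
  have "o_ab n (symm_adj B) e a b
      = (\<Sum>(i,j)\<in>pairs n. (if e i = a \<and> e j = b \<and> symm_adj B i j then 1 else 0)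
                         + (if e j = a \<and> e i = b \<and> symm_adj B j i then 1 else 0))
        + (\<Sum>i<n. (if e i = a \<and> e i = b \<and> symm_adj B i i then 1 else 0))"
    unfolding o_ab_def by (rule sum_split_square)
  also have "(\<Sum>i<n. (if e i = a \<and> e i = b \<and> symm_adj B i i then 1 else 0 :: real)) = 0"
    by (simp add: symm_adj_def)
  also have "(\<Sum>(i,j)\<in>pairs n. (if e i = a \<and> e j = b \<and> symm_adj B i j then 1 else 0)
                         + (if e j = a \<and> e i = b \<and> symm_adj B j i then 1 else 0))
           = (\<Sum>p\<in>pairs n. wt e a b p * (if B p then 1 else 0))"
  proof (intro sum.cong refl)
    fix p assume "p \<in> pairs n"
    then obtain i j where p: "p = (i, j)" "i < j" by (auto simp: pairs_def)
    have s1: "symm_adj B i j = B (i, j)" and s2: "symm_adj B j i = B (i, j)"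
      using p(2) by (simp_all add: symm_adj_def)
    show "(case p of (i, j) \<Rightarrow> (if e i = a \<and> e j = b \<and> symm_adj B i j then 1 else 0)
                         + (if e j = a \<and> e i = b \<and> symm_adj B j i then 1 else 0))
          = wt e a b p * (if B p then 1 else 0)"
      unfolding p wt_def using ind2_mult[of "e i = a \<and> e j = b" "symm_adj B i j" "e j = a \<and> e i = b"]
      by (simp only: s1 s2 fst_conv snd_conv case_prod_conv conj_assoc)
  qed
  finally show ?thesis by simp
qed

lemma card_as_sum: "real (card {i. i < (n::nat) \<and> P i}) = (\<Sum>i<n. if P i then 1 else 0)"
proof -
  have "(\<Sum>i<n. if P i then 1 else 0 :: real) = (\<Sum>i\<in>{i\<in>{..<n}. P i}. 1)"
    by (subst sum.inter_filter) auto
  also have "{i\<in>{..<n}. P i} = {i. i < n \<and> P i}" by auto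
  finally have "(\<Sum>i<n. if P i then 1 else 0 :: real) = (\<Sum>i\<in>{i. i < n \<and> P i}. 1)" .
  thus ?thesis by simp
qed

lemma ind_mult: "(if P then 1 else 0) * (if Q then 1 else 0 :: real) = (if P \<and> Q then 1 else 0)"
  by (cases P; cases Q) simp_all

lemma n_ab_pairs: "n_ab n e a b = (\<Sum>p\<in>pairs n. wt e a b p)"
proof -
  have "(\<Sum>i<n. \<Sum>j<n. (if e i = a then 1 else 0) * (if e j = b then 1 else 0 :: real))
      = (\<Sum>(i,j)\<in>pairs n. (if e i = a then 1 else 0) * (if e j = b then 1 else 0)
                           + (if e j = a then 1 else 0) * (if e i = b then 1 else 0))
        + (\<Sum>i<n. (if e i = a then 1 else 0) * (if e i = b then 1 else 0))"
    by (rule sum_split_square)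
  moreover have "(\<Sum>i<n. \<Sum>j<n. (if e i = a then 1 else 0) * (if e j = b then 1 else 0 :: real))
      = real (n_a n e a) * real (n_a n e b)"
    by (simp add: n_a_def card_as_sum sum_product)
  moreover have "(\<Sum>i<n. (if e i = a then 1 else 0) * (if e i = b then 1 else 0 :: real))
      = (if a = b then real (n_a n e a) else 0)"
  proof (cases "a = b")
    case True
    then show ?thesis by (simp add: n_a_def card_as_sum ind_mult)
  next
    case False
    have "\<And>i. (if e i = a then 1 else 0) * (if e i = b then 1 else 0 :: real) = 0"
    proof -
      fix i show "(if e i = a then 1 else 0) * (if e i = b then 1 else 0 :: real) = 0"
        using False by (cases "e i = a") simp_all
    qed
    then have "(\<Sum>i<n. (if e i = a then 1 else 0) * (if e i = b then 1 else 0 :: real)) = 0"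
      by (intro sum.neutral) blast
    then show ?thesis using False by simp
  qed
  moreover have "(\<Sum>(i,j)\<in>pairs n. (if e i = a then 1 else 0) * (if e j = b then 1 else 0)
                           + (if e j = a then 1 else 0) * (if e i = b then 1 else 0 :: real))
      = (\<Sum>p\<in>pairs n. wt e a b p)"
    by (intro sum.cong refl) (simp only: wt_def ind_mult case_prod_beta fst_conv snd_conv)
  ultimately have "(\<Sum>p\<in>pairs n. wt e a b p)
      = real (n_a n e a) * real (n_a n e b) - (if a = b then real (n_a n e a) else 0)" by linarith
  then show ?thesis by (cases "a = b") (simp_all add: n_ab_def algebra_simps)
qed


lemma sum_conf:
  fixes X :: "nat \<Rightarrow> real"
  assumes z: "\<forall>i<n. z i < k"
  shows "(\<Sum>c<k. confusion n e z a c * X c) = (\<Sum>i<n. if e i = a then X (z i) else 0) / real n"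
proof -
  have "(\<Sum>c<k. confusion n e z a c * X c)
      = (\<Sum>c<k. (\<Sum>i<n. (if e i = a \<and> z i = c then 1 else 0) * X c)) / real n"
    by (simp add: confusion_def card_as_sum sum_divide_distrib sum_distrib_right)
  also have "(\<Sum>c<k. (\<Sum>i<n. (if e i = a \<and> z i = c then 1 else 0) * X c))
      = (\<Sum>i<n. (\<Sum>c<k. (if e i = a \<and> z i = c then 1 else 0) * X c))"
    by (rule sum.swap)
  also have "\<dots> = (\<Sum>i<n. if e i = a then X (z i) else 0)"
  proof (intro sum.cong refl)
    fix i assume "i \<in> {..<n}"
    hence zi: "z i \<in> {..<k}" using z by auto
    show "(\<Sum>c<k. (if e i = a \<and> z i = c then 1 else 0) * X c) = (if e i = a then X (z i) else 0)"
    proof (cases "e i = a")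
      case True
      have "(\<Sum>c<k. (if e i = a \<and> z i = c then 1 else 0) * X c) = (\<Sum>c<k. if z i = c then X c else 0)"
        using True by (intro sum.cong refl) simp
      also have "\<dots> = X (z i)" using zi by (simp add: sum.delta)
      finally show ?thesis using True by simp
    next
      case False thus ?thesis by simp
    qed
  qed
  finally show ?thesis .
qed

lemma ind_pair_val:
  fixes v :: real
  shows "(if P1 then (if Q1 then v else 0) else 0) + (if P2 then (if Q2 then v else 0) else 0)
       = ((if P1 \<and> Q1 then 1 else 0) + (if P2 \<and> Q2 then 1 else 0)) * v"
  by (cases P1; cases Q1; cases P2; cases Q2) simp_all

lemma P_R_eq:
  fixes P :: "nat \<Rightarrow> nat \<Rightarrow> real"
  assumes z: "\<forall>i<n. z i < k" and n: "n > 0" and Psym: "\<forall>c<k. \<forall>d<k. P c d = P d c"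
  shows "P_R k n P (confusion n e z) a b
       = (\<Sum>p\<in>pairs n. wt e a b p * P (z (fst p)) (z (snd p))) / n_ab n e a b"
proof -
  define R where "R = confusion n e z"
  define f where "f i j = (if e i = a then (if e j = b then P (z i) (z j) else 0) else 0)" for i j
  define D where "D = (\<Sum>i<n. if e i = a then P (z i) (z i) else 0)"
  have T1: "(\<Sum>c<k. \<Sum>d<k. R a c * P c d * R b d) = (\<Sum>i<n. \<Sum>j<n. f i j) / (real n)\<^sup>2"
  proof -
    have "(\<Sum>c<k. \<Sum>d<k. R a c * P c d * R b d) = (\<Sum>c<k. R a c * (\<Sum>d<k. R b d * P c d))"
      by (simp add: sum_distrib_left mult_ac)
    also have "\<dots> = (\<Sum>c<k. R a c * ((\<Sum>j<n. if e j = b then P c (z j) else 0) / real n))"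
      unfolding R_def by (subst sum_conf[OF z]) (rule refl)
    also have "\<dots> = (\<Sum>i<n. if e i = a then (\<Sum>j<n. if e j = b then P (z i) (z j) else 0) / real n else 0) / real n"
      unfolding R_def by (rule sum_conf[OF z])
    also have "\<dots> = (\<Sum>i<n. (\<Sum>j<n. f i j) / real n) / real n"
    proof (intro arg_cong[where f="\<lambda>x. x / real n"] sum.cong refl)
      fix i show "(if e i = a then (\<Sum>j<n. if e j = b then P (z i) (z j) else 0) / real n else 0)
                  = (\<Sum>j<n. f i j) / real n"
        by (cases "e i = a") (simp_all add: f_def)
    qed
    also have "\<dots> = (\<Sum>i<n. \<Sum>j<n. f i j) / (real n)\<^sup>2"
      by (simp add: sum_divide_distrib[symmetric] power2_eq_square)
    finally show ?thesis .
  qed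
  have T2: "(\<Sum>i<k. P i i * R a i) = D / real n"
  proof -
    have "(\<Sum>i<k. P i i * R a i) = (\<Sum>i<k. R a i * P i i)" by (simp add: mult_ac)
    also have "\<dots> = D / real n" unfolding R_def D_def by (rule sum_conf[OF z])
    finally show ?thesis .
  qed
  have Ra: "(\<Sum>c<k. R a' c) = real (n_a n e a') / real n" for a'
  proof -
    have "(\<Sum>c<k. R a' c) = (\<Sum>c<k. R a' c * 1)" by simp
    also have "\<dots> = (\<Sum>i<n. if e i = a' then 1 else 0) / real n" unfolding R_def by (rule sum_conf[OF z])
    also have "\<dots> = real (n_a n e a') / real n" by (simp add: n_a_def card_as_sum)
    finally show ?thesis .
  qed
  have diag: "(\<Sum>i<n. f i i) = (if a = b then D else 0)"
  proof (cases "a = b")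
    case True
    have "f i i = (if e i = a then P (z i) (z i) else 0)" for i
      using True by (cases "e i = a") (simp_all add: f_def)
    thus ?thesis using True by (simp add: D_def)
  next
    case False
    have "f i i = 0" for i using False by (cases "e i = a") (simp_all add: f_def)
    thus ?thesis using False by simp
  qed
  have offd: "(\<Sum>(i,j)\<in>pairs n. f i j + f j i) = (\<Sum>p\<in>pairs n. wt e a b p * P (z (fst p)) (z (snd p)))"
  proof (intro sum.cong refl)
    fix p assume "p \<in> pairs n"
    then obtain i j where p: "p = (i, j)" "i < j" "j < n" by (auto simp: pairs_def)
    have sy: "P (z j) (z i) = P (z i) (z j)" using Psym z p by auto
    show "(case p of (i, j) \<Rightarrow> f i j + f j i) = wt e a b p * P (z (fst p)) (z (snd p))"
      unfolding p f_def wt_def using ind_pair_val[of "e i = a" "e j = b" "P (z i) (z j)" "e j = a" "e i = b"]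
      by (simp only: sy fst_conv snd_conv case_prod_conv)
  qed
  have F: "(\<Sum>i<n. \<Sum>j<n. f i j) - (if a = b then D else 0)
           = (\<Sum>p\<in>pairs n. wt e a b p * P (z (fst p)) (z (snd p)))"
    using sum_split_square[of f n] diag offd by simp
  have den: "(\<Sum>c<k. R a c) * ((\<Sum>c<k. R b c) - (if a = b then 1 / real n else 0))
             = n_ab n e a b / (real n)\<^sup>2"
    using n by (cases "a = b") (simp_all add: Ra n_ab_def field_simps power2_eq_square)
  have "P_R k n P (confusion n e z) a b
        = (((\<Sum>i<n. \<Sum>j<n. f i j) - (if a = b then D else 0)) / (real n)\<^sup>2) / (n_ab n e a b / (real n)\<^sup>2)"
    unfolding P_R_def R_def[symmetric] den T1 T2 using n
    by (cases "a = b") (simp_all add: diff_divide_distrib power2_eq_square)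
  also have "\<dots> = ((\<Sum>i<n. \<Sum>j<n. f i j) - (if a = b then D else 0)) / n_ab n e a b"
    using n by (simp add: divide_divide_eq_left power2_eq_square)
  finally show ?thesis unfolding F .
qed


lemma edge_tail:
  fixes S :: "nat \<Rightarrow> nat \<Rightarrow> real" and z e :: "nat \<Rightarrow> nat" and r lam t :: real and n a b :: nat
  defines "pp \<equiv> (\<lambda>p. r * S (z (fst p)) (z (snd p)))"
  defines "\<mu> \<equiv> (\<Sum>p\<in>pairs n. wt e a b p * pp p)"
  assumes pr: "\<And>p. p \<in> pairs n \<Longrightarrow> 0 \<le> pp p \<and> pp p \<le> 1"
    and lam: "0 \<le> lam" "lam \<le> 1/2"
  shows "measure_pmf.prob (Pi_pmf (pairs n) False (\<lambda>p. bernoulli_pmf (pp p)))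
           {B. \<bar>o_ab n (symm_adj B) e a b - \<mu>\<bar> \<ge> t}
         \<le> 2 * exp (lam\<^sup>2 * (2 * \<mu>) - lam * t)"
proof -
  define q where "q = (\<lambda>p. bernoulli_pmf (pp p))"
  define g where "g = (\<lambda>p (x::bool). wt e a b p * (if x then 1 else 0))"
  have g_rng: "0 \<le> g p x \<and> g p x \<le> 2" for p x
    using wt_range[of e a b p] by (auto simp: g_def)
  have Eg: "measure_pmf.expectation (q p) (g p) = wt e a b p * pp p" if "p \<in> pairs n" for p
    using pr[OF that] by (simp add: q_def g_def integral_bernoulli_pmf)
  have Eg2: "measure_pmf.expectation (q p) (\<lambda>x. (g p x)\<^sup>2) \<le> 2 * (wt e a b p * pp p)" if "p \<in> pairs n" for p
  proof -
    have "measure_pmf.expectation (q p) (\<lambda>x. (g p x)\<^sup>2) = (wt e a b p)\<^sup>2 * pp p"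
      using pr[OF that] by (simp add: q_def g_def integral_bernoulli_pmf power2_eq_square)
    also have "\<dots> \<le> (2 * wt e a b p) * pp p"
      using pr[OF that] wt_range[of e a b p] by (intro mult_right_mono) auto
    finally show ?thesis by simp
  qed
  have X: "o_ab n (symm_adj B) e a b = (\<Sum>p\<in>pairs n. g p (B p))" for B
    by (simp add: o_ab_pairs g_def)
  have mu: "(\<Sum>p\<in>pairs n. measure_pmf.expectation (q p) (g p)) = \<mu>"
    unfolding \<mu>_def by (intro sum.cong refl Eg)
  have V: "(\<Sum>p\<in>pairs n. measure_pmf.expectation (q p) (\<lambda>x. (g p x)\<^sup>2)) \<le> 2 * \<mu>"
    unfolding \<mu>_def sum_distrib_left by (intro sum_mono Eg2)
  have ch1: "measure_pmf.prob (Pi_pmf (pairs n) False q)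
      {y. c * ((\<Sum>p\<in>pairs n. g p (y p)) - \<mu>) \<ge> lam * t} \<le> exp (lam\<^sup>2 * (2 * \<mu>) - lam * t)"
    if c: "\<bar>c\<bar> = lam" for c
  proof -
    have "measure_pmf.prob (Pi_pmf (pairs n) False q)
      {y. c * ((\<Sum>p\<in>pairs n. g p (y p)) - (\<Sum>p\<in>pairs n. measure_pmf.expectation (q p) (g p))) \<ge> lam * t}
      \<le> exp (c\<^sup>2 * (\<Sum>p\<in>pairs n. measure_pmf.expectation (q p) (\<lambda>x. (g p x)\<^sup>2)) - lam * t)"
      by (rule chernoff_Pi) (use c lam g_rng in auto)
    also have "\<dots> \<le> exp (lam\<^sup>2 * (2 * \<mu>) - lam * t)"
    proof -
      have "c\<^sup>2 = lam\<^sup>2" using c by (metis power2_abs)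
      thus ?thesis using V by (simp add: mult_left_mono)
    qed
    finally show ?thesis unfolding mu .
  qed
  have sub: "{B. \<bar>o_ab n (symm_adj B) e a b - \<mu>\<bar> \<ge> t}
      \<subseteq> {y. lam * ((\<Sum>p\<in>pairs n. g p (y p)) - \<mu>) \<ge> lam * t}
          \<union> {y. (- lam) * ((\<Sum>p\<in>pairs n. g p (y p)) - \<mu>) \<ge> lam * t}"
  proof
    fix B assume "B \<in> {B. \<bar>o_ab n (symm_adj B) e a b - \<mu>\<bar> \<ge> t}"
    hence h: "\<bar>(\<Sum>p\<in>pairs n. g p (B p)) - \<mu>\<bar> \<ge> t" by (simp add: X)
    show "B \<in> {y. lam * ((\<Sum>p\<in>pairs n. g p (y p)) - \<mu>) \<ge> lam * t}
          \<union> {y. (- lam) * ((\<Sum>p\<in>pairs n. g p (y p)) - \<mu>) \<ge> lam * t}"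
    proof (cases "(\<Sum>p\<in>pairs n. g p (B p)) - \<mu> \<ge> 0")
      case True
      hence "(\<Sum>p\<in>pairs n. g p (B p)) - \<mu> \<ge> t" using h by simp
      hence "lam * ((\<Sum>p\<in>pairs n. g p (B p)) - \<mu>) \<ge> lam * t" using lam by (intro mult_left_mono)
      thus ?thesis by simp
    next
      case False
      hence "\<mu> - (\<Sum>p\<in>pairs n. g p (B p)) \<ge> t" using h by simp
      hence "lam * (\<mu> - (\<Sum>p\<in>pairs n. g p (B p))) \<ge> lam * t" using lam by (intro mult_left_mono)
      thus ?thesis by (simp add: algebra_simps)
    qed
  qed
  have "measure_pmf.prob (Pi_pmf (pairs n) False q) {B. \<bar>o_ab n (symm_adj B) e a b - \<mu>\<bar> \<ge> t}
      \<le> measure_pmf.prob (Pi_pmf (pairs n) False q)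
          ({y. lam * ((\<Sum>p\<in>pairs n. g p (y p)) - \<mu>) \<ge> lam * t}
          \<union> {y. (- lam) * ((\<Sum>p\<in>pairs n. g p (y p)) - \<mu>) \<ge> lam * t})"
    by (rule measure_pmf.finite_measure_mono[OF sub]) simp
  also have "\<dots> \<le> measure_pmf.prob (Pi_pmf (pairs n) False q) {y. lam * ((\<Sum>p\<in>pairs n. g p (y p)) - \<mu>) \<ge> lam * t}
      + measure_pmf.prob (Pi_pmf (pairs n) False q) {y. (- lam) * ((\<Sum>p\<in>pairs n. g p (y p)) - \<mu>) \<ge> lam * t}"
    by (rule measure_Un_le) simp_all
  also have "\<dots> \<le> exp (lam\<^sup>2 * (2 * \<mu>) - lam * t) + exp (lam\<^sup>2 * (2 * \<mu>) - lam * t)"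
    by (intro add_mono ch1) (use lam in auto)
  finally show ?thesis by (simp add: q_def)
qed


lemma comm_pmf_pmf:
  assumes pi_pos: "\<forall>a<k. \<pi> a > 0" and pi_sum: "(\<Sum>a<k. \<pi> a) = 1"
  shows "pmf (comm_pmf k \<pi>) a = (if a < k then \<pi> a else 0)"
proof -
  define f where "f = (\<lambda>a. if a < k then \<pi> a else 0)"
  have nn: "0 \<le> f x" for x using pi_pos by (auto simp: f_def less_imp_le)
  have "(\<integral>\<^sup>+x. ennreal (f x) \<partial>count_space UNIV) = (\<Sum>x\<in>{..<k}. ennreal (f x))"
    by (rule nn_integral_count_space') (auto simp: f_def)
  also have "\<dots> = ennreal (\<Sum>x\<in>{..<k}. f x)" by (rule sum_ennreal) (rule nn)
  also have "(\<Sum>x\<in>{..<k}. f x) = 1" using pi_sum by (simp add: f_def)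
  finally have one: "(\<integral>\<^sup>+x. ennreal (f x) \<partial>count_space UNIV) = 1" by simp
  show ?thesis unfolding comm_pmf_def f_def[symmetric]
    using pmf_embed_pmf[of f, OF nn one] by (simp add: f_def)
qed

lemma comm_pmf_set:
  assumes pi_pos: "\<forall>a<k. \<pi> a > 0" and pi_sum: "(\<Sum>a<k. \<pi> a) = 1"
  shows "set_pmf (comm_pmf k \<pi>) = {..<k}"
proof (rule set_eqI)
  fix x
  have "x \<in> set_pmf (comm_pmf k \<pi>) \<longleftrightarrow> pmf (comm_pmf k \<pi>) x \<noteq> 0" by (simp add: set_pmf_eq)
  also have "\<dots> \<longleftrightarrow> x \<in> {..<k}"
  proof (cases "x < k")
    case True
    then have "\<pi> x > 0" using pi_pos by blast
    then show ?thesis using True by (simp add: comm_pmf_pmf[OF pi_pos pi_sum])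
  next
    case False
    then show ?thesis by (simp add: comm_pmf_pmf[OF pi_pos pi_sum])
  qed
  finally show "x \<in> set_pmf (comm_pmf k \<pi>) \<longleftrightarrow> x \<in> {..<k}" .
qed

lemma Zpmf_set:
  assumes pi_pos: "\<forall>a<k. \<pi> a > 0" and pi_sum: "(\<Sum>a<k. \<pi> a) = 1"
    and "z \<in> set_pmf (Pi_pmf {..<(n::nat)} 0 (\<lambda>_. comm_pmf k \<pi>))"
  shows "\<forall>i<n. z i < k"
proof -
  have "z \<in> PiE_dflt {..<n} 0 (set_pmf \<circ> (\<lambda>_. comm_pmf k \<pi>))"
    using assms(3) set_Pi_pmf[of "{..<n}" 0 "\<lambda>_. comm_pmf k \<pi>"] by simp
  hence "\<forall>i<n. z i \<in> set_pmf (comm_pmf k \<pi>)" by (simp add: PiE_dflt_def)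
  thus ?thesis by (simp add: comm_pmf_set[OF pi_pos pi_sum])
qed

lemma lin_aux:
  fixes S T c :: real
  assumes "S < c / 2" "T = c"
  shows "c / 8 \<le> (- 1/4) * (S - T)"
  using assms by (simp add: field_simps)

lemma Z_unbal:
  assumes pi_pos: "\<forall>a<k. \<pi> a > 0" and pi_sum: "(\<Sum>a<k. \<pi> a) = 1" and a: "a < k"
  shows "measure_pmf.prob (Pi_pmf {..<n} 0 (\<lambda>_. comm_pmf k \<pi>))
           {z. real (n_a n z a) < real n * \<pi> a / 2} \<le> exp (- (real n * \<pi> a / 16))"
proof -
  define q where "q = (\<lambda>_::nat. comm_pmf k \<pi>)"
  define g where "g = (\<lambda>(_::nat) (x::nat). if x = a then 1 else (0::real))"
  have E: "measure_pmf.expectation (q i) (g i) = \<pi> a" for i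
  proof -
    have "measure_pmf.expectation (q i) (g i) = (\<Sum>x\<in>{a}. pmf (q i) x *\<^sub>R g i x)"
      by (rule integral_measure_pmf) (auto simp: g_def split: if_splits)
    thus ?thesis using comm_pmf_pmf[OF pi_pos pi_sum, of a] a by (simp add: q_def g_def)
  qed
  have E2: "measure_pmf.expectation (q i) (\<lambda>x. (g i x)\<^sup>2) = \<pi> a" for i
  proof -
    have "(\<lambda>x. (g i x)\<^sup>2) = g i" by (auto simp: g_def)
    thus ?thesis using E by simp
  qed
  have X: "real (n_a n z a) = (\<Sum>i<n. g i (z i))" for z
    by (simp add: n_a_def card_as_sum g_def)
  have "measure_pmf.prob (Pi_pmf {..<n} 0 q) {z. real (n_a n z a) < real n * \<pi> a / 2}
      \<le> measure_pmf.prob (Pi_pmf {..<n} 0 q)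
          {y. (- 1/4) * ((\<Sum>i<n. g i (y i)) - (\<Sum>i<n. measure_pmf.expectation (q i) (g i))) \<ge> real n * \<pi> a / 8}"
  proof (rule measure_pmf.finite_measure_mono)
    have sumE: "(\<Sum>i<n. measure_pmf.expectation (q i) (g i)) = real n * \<pi> a" by (simp add: E)
    show "{z. real (n_a n z a) < real n * \<pi> a / 2} \<subseteq>
      {y. (- 1/4) * ((\<Sum>i<n. g i (y i)) - (\<Sum>i<n. measure_pmf.expectation (q i) (g i))) \<ge> real n * \<pi> a / 8}"
    proof safe
      fix y assume "real (n_a n y a) < real n * \<pi> a / 2"
      hence "(\<Sum>i<n. g i (y i)) < real n * \<pi> a / 2" by (simp add: X)
      thus "(- 1/4) * ((\<Sum>i<n. g i (y i)) - (\<Sum>i<n. measure_pmf.expectation (q i) (g i))) \<ge> real n * \<pi> a / 8"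
        using lin_aux[OF _ sumE] by blast
    qed
  qed simp
  also have "\<dots> \<le> exp ((- 1/4)\<^sup>2 * (\<Sum>i<n. measure_pmf.expectation (q i) (\<lambda>x. (g i x)\<^sup>2)) - real n * \<pi> a / 8)"
    by (rule chernoff_Pi) (auto simp: g_def)
  also have "\<dots> = exp (- (real n * \<pi> a / 16))"
  proof -
    have "(\<Sum>i<n. measure_pmf.expectation (q i) (\<lambda>x. (g i x)\<^sup>2)) = real n * \<pi> a" by (simp add: E2)
    thus ?thesis by (simp add: power2_eq_square field_simps)
  qed
  finally show ?thesis by (simp add: q_def)
qed

lemma prob_bind_le:
  assumes "\<And>x. x \<in> set_pmf M \<Longrightarrow> x \<notin> U \<Longrightarrow> measure_pmf.prob (N x) X \<le> \<epsilon>" and eps: "0 \<le> \<epsilon>"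
  shows "measure_pmf.prob (bind_pmf M N) X \<le> \<epsilon> + measure_pmf.prob M U"
proof -
  have "emeasure (measure_pmf (bind_pmf M N)) X = (\<integral>\<^sup>+x. emeasure (measure_pmf (N x)) X \<partial>measure_pmf M)"
    by simp
  also have "\<dots> \<le> (\<integral>\<^sup>+x. (ennreal \<epsilon> + indicator U x) \<partial>measure_pmf M)"
  proof (rule nn_integral_mono_AE, rule AE_pmfI)
    fix x assume x: "x \<in> set_pmf M"
    show "emeasure (measure_pmf (N x)) X \<le> ennreal \<epsilon> + indicator U x"
    proof (cases "x \<in> U")
      case True
      have "emeasure (measure_pmf (N x)) X \<le> 1" by (rule measure_pmf.emeasure_le_1)
      also have "\<dots> \<le> ennreal \<epsilon> + indicator U x" using True by simp
      finally show ?thesis .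
    next
      case False
      have "emeasure (measure_pmf (N x)) X = ennreal (measure_pmf.prob (N x) X)"
        by (simp add: measure_pmf.emeasure_eq_measure)
      also have "\<dots> \<le> ennreal \<epsilon>" using assms(1)[OF x False] by (simp add: ennreal_leI)
      finally show ?thesis using False by simp
    qed
  qed
  also have "\<dots> = ennreal \<epsilon> + emeasure (measure_pmf M) U"
    by (simp add: nn_integral_add measure_pmf.emeasure_space_1)
  also have "\<dots> = ennreal (\<epsilon> + measure_pmf.prob M U)"
    using eps by (simp add: measure_pmf.emeasure_eq_measure ennreal_plus)
  finally have h: "emeasure (measure_pmf (bind_pmf M N)) X \<le> ennreal (\<epsilon> + measure_pmf.prob M U)" .
  hence "ennreal (measure_pmf.prob (bind_pmf M N) X) \<le> ennreal (\<epsilon> + measure_pmf.prob M U)"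
    by (simp only: measure_pmf.emeasure_eq_measure)
  moreover have "0 \<le> \<epsilon> + measure_pmf.prob M U" using eps by simp
  ultimately show ?thesis using ennreal_le_iff by blast
qed

lemma transfer_M:
  assumes meas: "(\<lambda>\<omega>. (Z \<omega>, A \<omega>)) \<in> M \<rightarrow>\<^sub>M count_space UNIV"
    and law: "distr M (count_space UNIV) (\<lambda>\<omega>. (Z \<omega>, A \<omega>)) = measure_pmf p"
  shows "measure M {\<omega> \<in> space M. Q (Z \<omega>) (A \<omega>)} = measure_pmf.prob p {x. Q (fst x) (snd x)}"
    and "{\<omega> \<in> space M. Q (Z \<omega>) (A \<omega>)} \<in> sets M"
proof -
  have eq: "{\<omega> \<in> space M. Q (Z \<omega>) (A \<omega>)} = (\<lambda>\<omega>. (Z \<omega>, A \<omega>)) -` {x. Q (fst x) (snd x)} \<inter> space M"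
    by auto
  show "measure M {\<omega> \<in> space M. Q (Z \<omega>) (A \<omega>)} = measure_pmf.prob p {x. Q (fst x) (snd x)}"
    unfolding eq law[symmetric] by (subst measure_distr[OF meas]) auto
  show "{\<omega> \<in> space M. Q (Z \<omega>) (A \<omega>)} \<in> sets M"
    unfolding eq by (rule measurable_sets[OF meas]) simp
qed


lemma S_le_smax:
  assumes "a < k" "b < k" shows "S a b \<le> s_max k S"
proof -
  have fin: "finite {S a b | a b. a < k \<and> b < k}"
  proof -
    have "{S a b | a b. a < k \<and> b < k} = (\<lambda>(a, b). S a b) ` ({..<k} \<times> {..<k})" by auto
    thus ?thesis by simp
  qed
  show ?thesis unfolding s_max_def by (rule Max_ge[OF fin]) (use assms in blast)
qed

definition Ep :: "(nat \<Rightarrow> nat \<Rightarrow> real) \<Rightarrow> real \<Rightarrow> nat \<Rightarrow> (nat \<Rightarrow> nat) \<Rightarrow> (nat \<times> nat \<Rightarrow> bool) pmf" where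
  "Ep S r n z = Pi_pmf (pairs n) False (\<lambda>p. bernoulli_pmf (r * S (z (fst p)) (z (snd p))))"

lemma sbm_decomp:
  "sbm_pmf k \<pi> S \<rho> n = bind_pmf (Pi_pmf {..<n} 0 (\<lambda>_. comm_pmf k \<pi>))
      (\<lambda>z. map_pmf (\<lambda>B. (z, symm_adj B)) (Ep S (\<rho> n) n z))"
  unfolding sbm_pmf_def Ep_def pairs_def by (simp add: case_prod_unfold)

definition mu_e :: "(nat \<Rightarrow> nat \<Rightarrow> real) \<Rightarrow> real \<Rightarrow> nat \<Rightarrow> (nat \<Rightarrow> nat) \<Rightarrow> (nat \<Rightarrow> nat) \<Rightarrow> nat \<Rightarrow> nat \<Rightarrow> real" where
  "mu_e S r n z e a b = (\<Sum>p\<in>pairs n. wt e a b p * (r * S (z (fst p)) (z (snd p))))"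

lemma Phat_minus_PR:
  assumes z: "\<forall>i<n. z i < k" and n: "n > 0" and S_sym: "\<forall>a<k. \<forall>b<k. S a b = S b a"
  shows "P_hat n (symm_adj B) e a b - P_R k n (\<lambda>c d. r * S c d) (confusion n e z) a b
       = (o_ab n (symm_adj B) e a b - mu_e S r n z e a b) / n_ab n e a b"
proof -
  have "P_R k n (\<lambda>c d. r * S c d) (confusion n e z) a b = mu_e S r n z e a b / n_ab n e a b"
    unfolding mu_e_def by (rule P_R_eq[OF z n]) (use S_sym in auto)
  thus ?thesis by (simp add: P_hat_def diff_divide_distrib)
qed

lemma mu_e_bounds:
  assumes z: "\<forall>i<n. z i < k" and r: "0 \<le> r" and S_pos: "\<forall>a<k. \<forall>b<k. S a b > 0"
  shows "0 \<le> mu_e S r n z e a b" "mu_e S r n z e a b \<le> r * s_max k S * n_ab n e a b"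
proof -
  have zz: "z (fst p) < k" "z (snd p) < k" if "p \<in> pairs n" for p
    using that z by (auto simp: pairs_def)
  show "0 \<le> mu_e S r n z e a b" unfolding mu_e_def
    using wt_range zz S_pos r by (intro sum_nonneg mult_nonneg_nonneg) (auto simp: less_imp_le)
  have "mu_e S r n z e a b \<le> (\<Sum>p\<in>pairs n. wt e a b p * (r * s_max k S))"
    unfolding mu_e_def
  proof (rule sum_mono, rule mult_left_mono)
    fix p assume p: "p \<in> pairs n"
    show "r * S (z (fst p)) (z (snd p)) \<le> r * s_max k S"
      using S_le_smax[OF zz[OF p]] r by (intro mult_left_mono)
    show "0 \<le> wt e a b p" using wt_range by blast
  qed
  also have "\<dots> = r * s_max k S * n_ab n e a b"
    by (simp add: n_ab_pairs sum_distrib_left sum_distrib_right mult_ac)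
  finally show "mu_e S r n z e a b \<le> r * s_max k S * n_ab n e a b" .
qed

lemma n_ab_lower:
  assumes na: "\<forall>c<k. real (n_a n e c) \<ge> x" and x: "x \<ge> 2" and ab: "a < k" "b < k"
  shows "n_ab n e a b \<ge> x\<^sup>2 / 2"
proof (cases "a = b")
  case True
  have A: "real (n_a n e a) \<ge> x" using na ab by blast
  have "x * (x - 1) \<le> real (n_a n e a) * (real (n_a n e a) - 1)"
    using A x by (intro mult_mono) auto
  moreover have "x\<^sup>2 / 2 \<le> x * (x - 1)" using x by (simp add: power2_eq_square field_simps)
  ultimately show ?thesis using True by (simp add: n_ab_def)
next
  case False
  have A: "real (n_a n e a) \<ge> x" "real (n_a n e b) \<ge> x" using na ab by blast+
  have "x * x \<le> real (n_a n e a) * real (n_a n e b)"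
    using A x by (intro mult_mono) auto
  moreover have "x\<^sup>2 / 2 \<le> x * x" using x by (simp add: power2_eq_square)
  ultimately show ?thesis using False by (simp add: n_ab_def)
qed


lemma exp_arith:
  fixes lam s \<delta> \<mu> r N X :: real
  assumes lam: "0 \<le> lam" "lam * (4 * s) \<le> \<delta>" and mu: "0 \<le> \<mu>" "\<mu> \<le> r * s * N"
    and r: "0 < r" and s: "0 < s" and N: "N \<ge> X / 2" and X: "X \<ge> 0" and d: "0 < \<delta>"
  shows "lam\<^sup>2 * (2 * \<mu>) - lam * (\<delta> * r * N) \<le> - (lam * \<delta> * r * X / 4)"
proof -
  have N0: "N \<ge> 0" using N X by linarith
  have 1: "lam\<^sup>2 * (2 * \<mu>) \<le> lam\<^sup>2 * (2 * (r * s * N))" using mu by (intro mult_left_mono) auto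
  have 2: "lam\<^sup>2 * (2 * (r * s * N)) = (lam * r * N) * (2 * lam * s)" by (simp add: power2_eq_square algebra_simps)
  have "2 * lam * s \<le> \<delta> / 2" using lam by simp
  hence 3: "(lam * r * N) * (2 * lam * s) \<le> (lam * r * N) * (\<delta> / 2)"
    using lam r N0 by (intro mult_left_mono) auto
  have 4: "(lam * \<delta> * r) * (X / 2) \<le> (lam * \<delta> * r) * N"
    using lam r d N by (intro mult_left_mono) auto
  have e1: "(lam * r * N) * (\<delta> / 2) = (lam * \<delta> * r * N) / 2" by (simp add: algebra_simps)
  have e2: "lam * (\<delta> * r * N) = lam * \<delta> * r * N" by (simp add: algebra_simps)
  have e3: "(lam * \<delta> * r) * (X / 2) = 2 * (lam * \<delta> * r * X / 4)" by (simp add: algebra_simps)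
  have e4: "(lam * \<delta> * r) * N = lam * \<delta> * r * N" by simp
  show ?thesis using 1 2 3 4 e1 e2 e3 e4 by linarith
qed

lemma card_F_set: "finite (F_set k n \<alpha>) \<and> card (F_set k n \<alpha>) \<le> k ^ n"
proof -
  have sub: "F_set k n \<alpha> \<subseteq> {..<n} \<rightarrow>\<^sub>E {..<k}" by (auto simp: F_set_def)
  have fin: "finite ({..<n} \<rightarrow>\<^sub>E {..<k})" by (intro finite_PiE) auto
  have "card ({..<n} \<rightarrow>\<^sub>E {..<k}) = k ^ n" by (simp add: card_PiE)
  thus ?thesis using finite_subset[OF sub fin] card_mono[OF fin sub] by simp
qed

lemma part2_n:
  fixes k n :: nat and \<pi> :: "nat \<Rightarrow> real" and S :: "nat \<Rightarrow> nat \<Rightarrow> real" and \<rho> :: "nat \<Rightarrow> real"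
    and \<alpha> \<delta> :: real
  assumes pi_pos: "\<forall>a<k. \<pi> a > 0" and pi_sum: "(\<Sum>a<k. \<pi> a) = 1"
    and S_sym: "\<forall>a<k. \<forall>b<k. S a b = S b a" and S_pos: "\<forall>a<k. \<forall>b<k. S a b > 0"
    and k: "k > 0" and n: "n > 0" and r: "\<rho> n > 0" and rs: "\<rho> n * s_max k S \<le> 1"
    and \<alpha>n: "\<alpha> * real n \<ge> 2" and \<delta>: "\<delta> > 0"
  defines "lam0 \<equiv> min (1/2) (\<delta> / (4 * s_max k S))"
  shows "measure_pmf.prob (sbm_pmf k \<pi> S \<rho> n)
           {x. \<exists>a<k. \<exists>b<k. \<exists>e\<in>F_set k n \<alpha>.
               \<bar>P_hat n (snd x) e a b - P_R k n (\<lambda>c d. \<rho> n * S c d) (confusion n e (fst x)) a b\<bar> \<ge> \<delta> * \<rho> n}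
         \<le> real k * real k * real k ^ n * (2 * exp (- (lam0 * \<delta> * \<rho> n * (\<alpha> * real n)\<^sup>2 / 4)))"
proof -
  define r where "r = \<rho> n"
  define bnd where "bnd = 2 * exp (- (lam0 * \<delta> * r * (\<alpha> * real n)\<^sup>2 / 4))"
  define F where "F = F_set k n \<alpha>"
  define T where "T = {..<k} \<times> {..<k} \<times> F"
  have smax: "s_max k S > 0" using S_le_smax[of 0 k 0 S] S_pos k by force
  have lam0: "0 \<le> lam0" "lam0 \<le> 1/2" "lam0 * (4 * s_max k S) \<le> \<delta>"
    using smax \<delta> by (auto simp: lam0_def min_def field_simps)
  have finF: "finite F" and cardF: "card F \<le> k ^ n" using card_F_set[of k n \<alpha>] by (auto simp: F_def)
  have finT: "finite T" using finF by (simp add: T_def)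
  have cardT: "real (card T) \<le> real k * real k * real k ^ n"
  proof -
    have "card T = k * k * card F" by (simp add: T_def card_cartesian_product)
    also have "\<dots> \<le> k * k * k ^ n" using cardF by simp
    finally show ?thesis by (metis of_nat_le_iff of_nat_mult of_nat_power)
  qed
  have bnd0: "0 \<le> bnd" by (simp add: bnd_def)
  have per_z: "measure_pmf.prob (map_pmf (\<lambda>B. (z, symm_adj B)) (Ep S r n z))
           {x. \<exists>a<k. \<exists>b<k. \<exists>e\<in>F_set k n \<alpha>.
               \<bar>P_hat n (snd x) e a b - P_R k n (\<lambda>c d. \<rho> n * S c d) (confusion n e (fst x)) a b\<bar> \<ge> \<delta> * \<rho> n}
        \<le> real (card T) * bnd"
    if zk: "\<forall>i<n. z i < k" for z
  proof -
    define E where "E = (\<lambda>(a, b, e). {B. \<bar>o_ab n (symm_adj B) e a b - mu_e S r n z e a b\<bar> \<ge> \<delta> * r * n_ab n e a b})"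
    have nab: "n_ab n e a b \<ge> (\<alpha> * real n)\<^sup>2 / 2" if "e \<in> F" "a < k" "b < k" for e a b
      by (rule n_ab_lower[where k=k]) (use that \<alpha>n in \<open>auto simp: F_def F_set_def\<close>)
    have nabpos: "n_ab n e a b > 0" if "e \<in> F" "a < k" "b < k" for e a b
    proof -
      have "\<alpha> * real n > 0" using \<alpha>n by linarith
      hence "(\<alpha> * real n)\<^sup>2 / 2 > 0" by (intro divide_pos_pos zero_less_power) simp_all
      thus ?thesis using nab[OF that] by linarith
    qed
    have sub: "(\<lambda>B. (z, symm_adj B)) -` {x. \<exists>a<k. \<exists>b<k. \<exists>e\<in>F_set k n \<alpha>.
               \<bar>P_hat n (snd x) e a b - P_R k n (\<lambda>c d. \<rho> n * S c d) (confusion n e (fst x)) a b\<bar> \<ge> \<delta> * \<rho> n}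
          \<subseteq> (\<Union>t\<in>T. E t)"
    proof
      fix B assume "B \<in> (\<lambda>B. (z, symm_adj B)) -` {x. \<exists>a<k. \<exists>b<k. \<exists>e\<in>F_set k n \<alpha>.
               \<bar>P_hat n (snd x) e a b - P_R k n (\<lambda>c d. \<rho> n * S c d) (confusion n e (fst x)) a b\<bar> \<ge> \<delta> * \<rho> n}"
      then obtain a b e where ab: "a < k" "b < k" and e: "e \<in> F"
        and h: "\<bar>P_hat n (symm_adj B) e a b - P_R k n (\<lambda>c d. r * S c d) (confusion n e z) a b\<bar> \<ge> \<delta> * r"
        by (auto simp: F_def r_def)
      have np: "n_ab n e a b > 0" by (rule nabpos[OF e ab])
      have "\<bar>(o_ab n (symm_adj B) e a b - mu_e S r n z e a b) / n_ab n e a b\<bar> \<ge> \<delta> * r"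
        using h Phat_minus_PR[OF zk n S_sym, of B e a b r] by simp
      hence "\<bar>o_ab n (symm_adj B) e a b - mu_e S r n z e a b\<bar> / n_ab n e a b \<ge> \<delta> * r"
        using np by (simp add: abs_divide)
      hence "\<bar>o_ab n (symm_adj B) e a b - mu_e S r n z e a b\<bar> \<ge> \<delta> * r * n_ab n e a b"
        using np by (simp add: pos_le_divide_eq)
      hence "B \<in> E (a, b, e)" by (simp add: E_def)
      moreover have "(a, b, e) \<in> T" using ab e by (simp add: T_def)
      ultimately show "B \<in> (\<Union>t\<in>T. E t)" by blast
    qed
    have each: "measure_pmf.prob (Ep S r n z) (E t) \<le> bnd" if t: "t \<in> T" for t
    proof -
      obtain a b e where t': "t = (a, b, e)" by (cases t) auto
      have ab: "a < k" "b < k" and e: "e \<in> F" using t unfolding t' T_def by auto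
      have pp: "0 \<le> r * S (z (fst p)) (z (snd p)) \<and> r * S (z (fst p)) (z (snd p)) \<le> 1" if p: "p \<in> pairs n" for p
      proof -
        have zz: "z (fst p) < k" "z (snd p) < k" using p zk by (auto simp: pairs_def)
        have "S (z (fst p)) (z (snd p)) > 0" using S_pos zz by blast
        hence h3: "0 \<le> r * S (z (fst p)) (z (snd p))" using r by (simp add: r_def)
        have h1: "r * S (z (fst p)) (z (snd p)) \<le> r * s_max k S"
          using S_le_smax[OF zz, of S] r by (intro mult_left_mono) (auto simp: r_def)
        have h2: "r * s_max k S \<le> 1" using rs by (simp add: r_def)
        show ?thesis using h1 h2 h3 by linarith
      qed
      have "measure_pmf.prob (Ep S r n z) (E t)
            \<le> 2 * exp (lam0\<^sup>2 * (2 * mu_e S r n z e a b) - lam0 * (\<delta> * r * n_ab n e a b))"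
        unfolding Ep_def t' E_def mu_e_def
        by (simp only: case_prod_conv) (rule edge_tail[where S=S and z=z and r=r and n=n and e=e and a=a and b=b and lam=lam0
             and t="\<delta> * r * n_ab n e a b", OF pp lam0(1,2)])
      also have "\<dots> \<le> bnd"
      proof -
        have mb: "0 \<le> mu_e S r n z e a b" "mu_e S r n z e a b \<le> r * s_max k S * n_ab n e a b"
          using mu_e_bounds[OF zk, of r S e a b] r S_pos by (auto simp: r_def)
        have "lam0\<^sup>2 * (2 * mu_e S r n z e a b) - lam0 * (\<delta> * r * n_ab n e a b)
              \<le> - (lam0 * \<delta> * r * (\<alpha> * real n)\<^sup>2 / 4)"
          by (rule exp_arith[OF lam0(1) lam0(3) mb]) (use r smax nab[OF e ab] \<delta> in \<open>auto simp: r_def\<close>)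
        thus ?thesis by (simp add: bnd_def)
      qed
      finally show ?thesis .
    qed
    have "measure_pmf.prob (map_pmf (\<lambda>B. (z, symm_adj B)) (Ep S r n z))
           {x. \<exists>a<k. \<exists>b<k. \<exists>e\<in>F_set k n \<alpha>.
               \<bar>P_hat n (snd x) e a b - P_R k n (\<lambda>c d. \<rho> n * S c d) (confusion n e (fst x)) a b\<bar> \<ge> \<delta> * \<rho> n}
        = measure_pmf.prob (Ep S r n z) ((\<lambda>B. (z, symm_adj B)) -` {x. \<exists>a<k. \<exists>b<k. \<exists>e\<in>F_set k n \<alpha>.
               \<bar>P_hat n (snd x) e a b - P_R k n (\<lambda>c d. \<rho> n * S c d) (confusion n e (fst x)) a b\<bar> \<ge> \<delta> * \<rho> n})"
      by (rule measure_map_pmf)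
    also have "\<dots> \<le> measure_pmf.prob (Ep S r n z) (\<Union>t\<in>T. E t)"
      by (rule measure_pmf.finite_measure_mono[OF sub]) simp
    also have "\<dots> \<le> (\<Sum>t\<in>T. measure_pmf.prob (Ep S r n z) (E t))"
      by (rule measure_UNION_le[OF finT]) simp
    also have "\<dots> \<le> (\<Sum>t\<in>T. bnd)" by (rule sum_mono) (rule each)
    also have "\<dots> = real (card T) * bnd" by simp
    finally show ?thesis .
  qed
  have "measure_pmf.prob (sbm_pmf k \<pi> S \<rho> n)
           {x. \<exists>a<k. \<exists>b<k. \<exists>e\<in>F_set k n \<alpha>.
               \<bar>P_hat n (snd x) e a b - P_R k n (\<lambda>c d. \<rho> n * S c d) (confusion n e (fst x)) a b\<bar> \<ge> \<delta> * \<rho> n}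
        \<le> real (card T) * bnd + measure_pmf.prob (Pi_pmf {..<n} 0 (\<lambda>_. comm_pmf k \<pi>)) {}"
    unfolding sbm_decomp
    by (rule prob_bind_le) (use per_z Zpmf_set[OF pi_pos pi_sum] bnd0 in \<open>auto simp: r_def\<close>)
  also have "\<dots> = real (card T) * bnd" by simp
  also have "\<dots> \<le> real k * real k * real k ^ n * bnd" by (rule mult_right_mono[OF cardT bnd0])
  finally show ?thesis by (simp add: bnd_def r_def)
qed


lemma mu_self:
  assumes zk: "\<forall>i<n. z i < k" and S_sym: "\<forall>a<k. \<forall>b<k. S a b = S b a" and ab: "a < k" "b < k"
  shows "mu_e S r n z z a b = r * S a b * n_ab n z a b"
proof -
  have pt: "wt z a b p * (r * S (z (fst p)) (z (snd p))) = wt z a b p * (r * S a b)" if p: "p \<in> pairs n" for p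
  proof -
    obtain i j where pij: "p = (i, j)" by (cases p) auto
    have "S (z i) (z j) = S a b \<or> wt z a b p = 0"
    proof -
      consider (A) "z i = a \<and> z j = b" | (B) "z j = a \<and> z i = b"
        | (C) "\<not> (z i = a \<and> z j = b)" "\<not> (z j = a \<and> z i = b)" by blast
      then show ?thesis
      proof cases
        case A
        hence h: "z i = a" "z j = b" by blast+
        have "S (z i) (z j) = S a b" by (simp only: h)
        thus ?thesis by (rule disjI1)
      next
        case B
        hence h: "z i = b" "z j = a" by blast+
        have "S (z i) (z j) = S b a" by (simp only: h)
        also have "S b a = S a b" using S_sym ab by blast
        finally show ?thesis by (rule disjI1)
      next
        case C
        have "wt z a b p = 0"
          by (simp only: wt_def pij fst_conv snd_conv if_not_P[OF C(1)] if_not_P[OF C(2)] add_0_left)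
        thus ?thesis by (rule disjI2)
      qed
    qed
    thus ?thesis by (elim disjE) (simp_all add: pij)
  qed
  have "mu_e S r n z z a b = (\<Sum>p\<in>pairs n. wt z a b p * (r * S a b))"
    unfolding mu_e_def by (rule sum.cong[OF refl pt])
  also have "\<dots> = r * S a b * n_ab n z a b"
    by (simp add: n_ab_pairs sum_distrib_left sum_distrib_right mult_ac)
  finally show ?thesis .
qed

lemma exp_arith1:
  fixes lam s r th \<mu> N \<delta> L pm :: real and n :: nat
  assumes lam: "0 \<le> lam" "lam * (4 * s * r) = th" and mu: "0 \<le> \<mu>" "\<mu> \<le> r * s * N"
    and r: "0 < r" and s: "0 < s" and th: "th\<^sup>2 = \<delta> * r * L / (real n)\<^sup>2" and n: "n > 0"
    and N: "N \<ge> (real n * pm / 2)\<^sup>2 / 2" and d: "0 \<le> \<delta>" and L: "0 \<le> L"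
  shows "lam\<^sup>2 * (2 * \<mu>) - lam * (th * N) \<le> - (\<delta> * L * pm\<^sup>2 / (64 * s))"
proof -
  have 1: "lam\<^sup>2 * (2 * \<mu>) \<le> lam\<^sup>2 * (2 * (r * s * N))" using mu by (intro mult_left_mono) auto
  have 2: "lam\<^sup>2 * (2 * (r * s * N)) = lam * th * N / 2"
    using lam(2)[symmetric] by (simp add: power2_eq_square algebra_simps)
  have lt: "lam * th = \<delta> * L / (4 * s * (real n)\<^sup>2)"
  proof -
    have "lam = th / (4 * s * r)" using lam(2) r s by (simp add: field_simps)
    hence "lam * th = th\<^sup>2 / (4 * s * r)" by (simp add: power2_eq_square)
    also have "\<dots> = \<delta> * L / (4 * s * (real n)\<^sup>2)" using th r s n by (simp add: field_simps)
    finally show ?thesis .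
  qed
  have lt0: "0 \<le> lam * th" using lt d L s by simp
  have 3: "lam * th * ((real n * pm / 2)\<^sup>2 / 2) \<le> lam * th * N" using N lt0 by (intro mult_left_mono)
  have 4: "lam * th * ((real n * pm / 2)\<^sup>2 / 2) = \<delta> * L * pm\<^sup>2 / (32 * s)"
    unfolding lt using n s by (simp add: field_simps power2_eq_square)
  have e: "lam * (th * N) = lam * th * N" by simp
  have e2: "\<delta> * L * pm\<^sup>2 / (32 * s) = 2 * (\<delta> * L * pm\<^sup>2 / (64 * s))" by simp
  show ?thesis using 1 2 3 4 e e2 by linarith
qed


lemma part1_n:
  fixes k n :: nat and \<pi> :: "nat \<Rightarrow> real" and S :: "nat \<Rightarrow> nat \<Rightarrow> real" and \<rho> :: "nat \<Rightarrow> real"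
    and \<delta> pm :: real
  assumes pi_pos: "\<forall>a<k. \<pi> a > 0" and pi_sum: "(\<Sum>a<k. \<pi> a) = 1"
    and S_sym: "\<forall>a<k. \<forall>b<k. S a b = S b a" and S_pos: "\<forall>a<k. \<forall>b<k. S a b > 0"
    and k: "k > 0" and n: "n > 0" and r: "\<rho> n > 0" and rs: "\<rho> n * s_max k S \<le> 1"
    and pm: "\<forall>a<k. \<pi> a \<ge> pm" and npm: "real n * pm / 2 \<ge> 2" and \<delta>: "\<delta> > 0"
    and lnn: "ln (real n) \<ge> 0"
    and lam: "sqrt (\<delta> * \<rho> n * ln (real n)) / real n / (4 * s_max k S * \<rho> n) \<le> 1/2"
  shows "measure_pmf.prob (sbm_pmf k \<pi> S \<rho> n)
           {x. \<not> (\<forall>a<k. \<forall>b<k. \<bar>P_hat n (snd x) (fst x) a b - \<rho> n * S a b\<bar>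
                     < sqrt (\<delta> * \<rho> n * ln (real n)) / real n)}
         \<le> real k * real k * (2 * exp (- (\<delta> * ln (real n) * pm\<^sup>2 / (64 * s_max k S))))
           + (\<Sum>a<k. exp (- (real n * \<pi> a / 16)))"
proof -
  define r where "r = \<rho> n"
  define th where "th = sqrt (\<delta> * r * ln (real n)) / real n"
  define s where "s = s_max k S"
  define lam where "lam = th / (4 * s * r)"
  define bnd where "bnd = 2 * exp (- (\<delta> * ln (real n) * pm\<^sup>2 / (64 * s)))"
  define T where "T = {..<k} \<times> {..<(k::nat)}"
  define U where "U = (\<Union>a\<in>{..<k}. {z. real (n_a n z a) < real n * \<pi> a / 2})"
  have smax: "s > 0" using S_le_smax[of 0 k 0 S] S_pos k by (force simp: s_def)
  have r0: "r > 0" using r by (simp add: r_def)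
  have th0: "th \<ge> 0" using r0 \<delta> lnn by (simp add: th_def)
  have lam0: "0 \<le> lam" "lam \<le> 1/2" "lam * (4 * s * r) = th"
  proof -
    show "0 \<le> lam" unfolding lam_def using th0 smax r0 by (intro divide_nonneg_pos) auto
    show "lam \<le> 1/2" using lam by (simp add: lam_def th_def r_def s_def)
    show "lam * (4 * s * r) = th" using smax r0 by (simp add: lam_def)
  qed
  have th2: "th\<^sup>2 = \<delta> * r * ln (real n) / (real n)\<^sup>2"
    using r0 \<delta> lnn by (simp add: th_def power_divide)
  have bnd0: "0 \<le> bnd" by (simp add: bnd_def)
  have cardT: "card T = k * k" by (simp add: T_def card_cartesian_product)
  have per_z: "measure_pmf.prob (map_pmf (\<lambda>B. (z, symm_adj B)) (Ep S r n z))
           {x. \<not> (\<forall>a<k. \<forall>b<k. \<bar>P_hat n (snd x) (fst x) a b - \<rho> n * S a b\<bar>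
                     < sqrt (\<delta> * \<rho> n * ln (real n)) / real n)}
        \<le> real k * real k * bnd"
    if zk: "\<forall>i<n. z i < k" and zU: "z \<notin> U" for z
  proof -
    define E where "E = (\<lambda>(a, b). {B. \<bar>o_ab n (symm_adj B) z a b - mu_e S r n z z a b\<bar> \<ge> th * n_ab n z a b})"
    have na: "\<forall>c<k. real (n_a n z c) \<ge> real n * pm / 2"
    proof (intro allI impI)
      fix c assume c: "c < k"
      have "real (n_a n z c) \<ge> real n * \<pi> c / 2" using zU c by (auto simp: U_def not_less)
      moreover have "real n * pm / 2 \<le> real n * \<pi> c / 2" using pm c by (intro divide_right_mono mult_left_mono) auto
      ultimately show "real (n_a n z c) \<ge> real n * pm / 2" by linarith
    qed
    have nab: "n_ab n z a b \<ge> (real n * pm / 2)\<^sup>2 / 2" if "a < k" "b < k" for a b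
      by (rule n_ab_lower[OF na npm that])
    have nabpos: "n_ab n z a b > 0" if "a < k" "b < k" for a b
    proof -
      have "real n * pm / 2 > 0" using npm by linarith
      hence "(real n * pm / 2)\<^sup>2 / 2 > 0" by (intro divide_pos_pos zero_less_power) simp_all
      thus ?thesis using nab[OF that] by linarith
    qed
    have sub: "(\<lambda>B. (z, symm_adj B)) -` {x. \<not> (\<forall>a<k. \<forall>b<k. \<bar>P_hat n (snd x) (fst x) a b - \<rho> n * S a b\<bar>
                     < sqrt (\<delta> * \<rho> n * ln (real n)) / real n)}
          \<subseteq> (\<Union>t\<in>T. E t)"
    proof
      fix B assume "B \<in> (\<lambda>B. (z, symm_adj B)) -` {x. \<not> (\<forall>a<k. \<forall>b<k. \<bar>P_hat n (snd x) (fst x) a b - \<rho> n * S a b\<bar>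
                     < sqrt (\<delta> * \<rho> n * ln (real n)) / real n)}"
      then obtain a b where ab: "a < k" "b < k"
        and h: "\<bar>P_hat n (symm_adj B) z a b - r * S a b\<bar> \<ge> th"
        by (auto simp: r_def th_def not_less)
      have np: "n_ab n z a b > 0" by (rule nabpos[OF ab])
      have "P_hat n (symm_adj B) z a b - r * S a b
            = (o_ab n (symm_adj B) z a b - mu_e S r n z z a b) / n_ab n z a b"
        using np mu_self[OF zk S_sym ab, of r] by (simp add: P_hat_def field_simps)
      hence "\<bar>o_ab n (symm_adj B) z a b - mu_e S r n z z a b\<bar> / n_ab n z a b \<ge> th"
        using h np by (simp add: abs_divide)
      hence "\<bar>o_ab n (symm_adj B) z a b - mu_e S r n z z a b\<bar> \<ge> th * n_ab n z a b"
        using np by (simp add: pos_le_divide_eq)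
      hence "B \<in> E (a, b)" by (simp add: E_def)
      moreover have "(a, b) \<in> T" using ab by (simp add: T_def)
      ultimately show "B \<in> (\<Union>t\<in>T. E t)" by blast
    qed
    have each: "measure_pmf.prob (Ep S r n z) (E t) \<le> bnd" if t: "t \<in> T" for t
    proof -
      obtain a b where t': "t = (a, b)" by (cases t) auto
      have ab: "a < k" "b < k" using t unfolding t' T_def by auto
      have pp: "0 \<le> r * S (z (fst p)) (z (snd p)) \<and> r * S (z (fst p)) (z (snd p)) \<le> 1" if p: "p \<in> pairs n" for p
      proof -
        have zz: "z (fst p) < k" "z (snd p) < k" using p zk by (auto simp: pairs_def)
        have "S (z (fst p)) (z (snd p)) > 0" using S_pos zz by blast
        hence h3: "0 \<le> r * S (z (fst p)) (z (snd p))" using r0 by simp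
        have h1: "r * S (z (fst p)) (z (snd p)) \<le> r * s_max k S"
          using S_le_smax[OF zz, of S] r0 by (intro mult_left_mono) auto
        have h2: "r * s_max k S \<le> 1" using rs by (simp add: r_def)
        show ?thesis using h1 h2 h3 by linarith
      qed
      have "measure_pmf.prob (Ep S r n z) (E t)
            \<le> 2 * exp (lam\<^sup>2 * (2 * mu_e S r n z z a b) - lam * (th * n_ab n z a b))"
        unfolding Ep_def t' E_def mu_e_def
        by (simp only: case_prod_conv) (rule edge_tail[where S=S and z=z and r=r and n=n and e=z and a=a and b=b and lam=lam
             and t="th * n_ab n z a b", OF pp lam0(1,2)])
      also have "\<dots> \<le> bnd"
      proof -
        have mb: "0 \<le> mu_e S r n z z a b" "mu_e S r n z z a b \<le> r * s * n_ab n z a b"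
          using mu_e_bounds[OF zk, of r S z a b] r0 S_pos by (auto simp: s_def)
        have "lam\<^sup>2 * (2 * mu_e S r n z z a b) - lam * (th * n_ab n z a b)
              \<le> - (\<delta> * ln (real n) * pm\<^sup>2 / (64 * s))"
          by (rule exp_arith1[OF lam0(1) lam0(3) mb r0 smax th2 n nab[OF ab]]) (use \<delta> lnn in auto)
        thus ?thesis by (simp add: bnd_def)
      qed
      finally show ?thesis .
    qed
    have "measure_pmf.prob (map_pmf (\<lambda>B. (z, symm_adj B)) (Ep S r n z))
           {x. \<not> (\<forall>a<k. \<forall>b<k. \<bar>P_hat n (snd x) (fst x) a b - \<rho> n * S a b\<bar>
                     < sqrt (\<delta> * \<rho> n * ln (real n)) / real n)}
        = measure_pmf.prob (Ep S r n z) ((\<lambda>B. (z, symm_adj B)) -` {x. \<not> (\<forall>a<k. \<forall>b<k. \<bar>P_hat n (snd x) (fst x) a b - \<rho> n * S a b\<bar>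
                     < sqrt (\<delta> * \<rho> n * ln (real n)) / real n)})"
      by (rule measure_map_pmf)
    also have "\<dots> \<le> measure_pmf.prob (Ep S r n z) (\<Union>t\<in>T. E t)"
      by (rule measure_pmf.finite_measure_mono[OF sub]) simp
    also have "\<dots> \<le> (\<Sum>t\<in>T. measure_pmf.prob (Ep S r n z) (E t))"
      by (rule measure_UNION_le) (simp_all add: T_def)
    also have "\<dots> \<le> (\<Sum>t\<in>T. bnd)" by (rule sum_mono) (rule each)
    also have "\<dots> = real k * real k * bnd" by (simp add: cardT)
    finally show ?thesis .
  qed
  have PU: "measure_pmf.prob (Pi_pmf {..<n} 0 (\<lambda>_. comm_pmf k \<pi>)) U \<le> (\<Sum>a<k. exp (- (real n * \<pi> a / 16)))"
  proof -
    have "measure_pmf.prob (Pi_pmf {..<n} 0 (\<lambda>_. comm_pmf k \<pi>)) U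
        \<le> (\<Sum>a<k. measure_pmf.prob (Pi_pmf {..<n} 0 (\<lambda>_. comm_pmf k \<pi>)) {z. real (n_a n z a) < real n * \<pi> a / 2})"
      unfolding U_def by (rule measure_UNION_le) simp_all
    also have "\<dots> \<le> (\<Sum>a<k. exp (- (real n * \<pi> a / 16)))"
      by (rule sum_mono) (rule Z_unbal[OF pi_pos pi_sum], simp)
    finally show ?thesis .
  qed
  have "measure_pmf.prob (sbm_pmf k \<pi> S \<rho> n)
           {x. \<not> (\<forall>a<k. \<forall>b<k. \<bar>P_hat n (snd x) (fst x) a b - \<rho> n * S a b\<bar>
                     < sqrt (\<delta> * \<rho> n * ln (real n)) / real n)}
        \<le> real k * real k * bnd + measure_pmf.prob (Pi_pmf {..<n} 0 (\<lambda>_. comm_pmf k \<pi>)) U"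
    unfolding sbm_decomp
    by (rule prob_bind_le) (use per_z Zpmf_set[OF pi_pos pi_sum] bnd0 in \<open>auto simp: r_def\<close>)
  also have "\<dots> \<le> real k * real k * bnd + (\<Sum>a<k. exp (- (real n * \<pi> a / 16)))"
    using PU by simp
  finally show ?thesis by (simp add: bnd_def s_def)
qed


lemma exp_neg_lim:
  fixes f :: "'a \<Rightarrow> real"
  assumes "c > 0" "filterlim f at_top F"
  shows "((\<lambda>x. exp (- (c * f x))) \<longlongrightarrow> 0) F"
proof -
  have "filterlim (\<lambda>x. c * f x) at_top F"
    by (rule filterlim_tendsto_pos_mult_at_top[OF tendsto_const assms])
  hence "filterlim (\<lambda>x. - (c * f x)) at_bot F" by (simp add: filterlim_uminus_at_top[symmetric])
  thus ?thesis by (rule filterlim_compose[OF exp_at_bot])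
qed

lemma pmf_prob_neg: "measure_pmf.prob p {x. P x} = 1 - measure_pmf.prob p {x. \<not> P x}"
proof -
  have "measure_pmf.prob p (space (measure_pmf p) - {x. \<not> P x}) = 1 - measure_pmf.prob p {x. \<not> P x}"
    by (rule measure_pmf.prob_compl) simp
  moreover have "space (measure_pmf p) - {x. \<not> P x} = {x. P x}" by auto
  ultimately show ?thesis by simp
qed

lemma lam_arith:
  fixes \<delta> r s :: real and n :: nat
  assumes d: "\<delta> > 0" and r: "r > 0" and s: "s > 0" and n: "n > 0" and nr: "real n * r \<ge> 1"
    and ln1: "\<delta> * ln (real n) \<le> 4 * s\<^sup>2 * real n" and ln0: "ln (real n) \<ge> 0"
  shows "sqrt (\<delta> * r * ln (real n)) / real n / (4 * s * r) \<le> 1/2"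
proof -
  have "\<delta> * r * ln (real n) = r * (\<delta> * ln (real n))" by simp
  also have "\<dots> \<le> r * (4 * s\<^sup>2 * real n)" using ln1 r by (intro mult_left_mono) auto
  also have "\<dots> = (4 * s\<^sup>2 * real n * r) * 1" by simp
  also have "\<dots> \<le> (4 * s\<^sup>2 * real n * r) * (real n * r)" using nr r s n by (intro mult_left_mono) auto
  also have "\<dots> = (2 * s * r * real n)\<^sup>2" by (simp add: power2_eq_square algebra_simps)
  finally have "sqrt (\<delta> * r * ln (real n)) \<le> sqrt ((2 * s * r * real n)\<^sup>2)" by (rule real_sqrt_le_mono)
  also have "\<dots> = 2 * s * r * real n" using s r by simp
  finally have h: "sqrt (\<delta> * r * ln (real n)) \<le> 2 * s * r * real n" .
  have "sqrt (\<delta> * r * ln (real n)) / real n / (4 * s * r) = sqrt (\<delta> * r * ln (real n)) / (real n * (4 * s * r))"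
    by simp
  also have "\<dots> \<le> (2 * s * r * real n) / (real n * (4 * s * r))"
    using h n s r by (intro divide_right_mono) auto
  also have "\<dots> = 1/2" using n s r by (simp add: field_simps)
  finally show ?thesis .
qed

lemma kn_arith:
  fixes X :: real and k n :: nat
  assumes k: "k > 0" and X: "X \<ge> real n * (ln (real k) + 1)"
  shows "real k ^ n * exp (- X) \<le> exp (- real n)"
proof -
  have "real k ^ n = exp (real n * ln (real k))" using k by (simp add: exp_of_nat_mult)
  hence "real k ^ n * exp (- X) = exp (real n * ln (real k) - X)" by (simp add: exp_diff exp_minus field_simps)
  also have "\<dots> \<le> exp (- real n)" using X by (simp add: algebra_simps)
  finally show ?thesis .
qed


theorem theorem4:
  fixes k :: nat and \<pi> :: "nat \<Rightarrow> real" and S :: "nat \<Rightarrow> nat \<Rightarrow> real"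
    and \<rho> :: "nat \<Rightarrow> real"
    and M :: "'w measure"
    and Z :: "nat \<Rightarrow> 'w \<Rightarrow> nat \<Rightarrow> nat"
    and A :: "nat \<Rightarrow> 'w \<Rightarrow> nat \<Rightarrow> nat \<Rightarrow> bool"
  assumes k2: "k \<ge> 2"
    and pi_pos: "\<forall>a<k. \<pi> a > 0"
    and pi_sum: "(\<Sum>a<k. \<pi> a) = 1"
    and S_sym: "\<forall>a<k. \<forall>b<k. S a b = S b a"
    and S_pos: "\<forall>a<k. \<forall>b<k. S a b > 0"
    and S_cols: "\<forall>a<k. \<forall>b<k. a \<noteq> b \<longrightarrow> (\<exists>c<k. S c a \<noteq> S c b)"
    and rho_lim: "\<rho> \<longlonglongrightarrow> 0"
    and nrho: "filterlim (\<lambda>n. real n * \<rho> n) at_top sequentially"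
    and M_prob: "prob_space M"
    and meas: "\<forall>n. (\<lambda>\<omega>. (Z n \<omega>, A n \<omega>)) \<in> M \<rightarrow>\<^sub>M count_space UNIV"
    and law: "\<forall>n. distr M (count_space UNIV) (\<lambda>\<omega>. (Z n \<omega>, A n \<omega>))
                  = measure_pmf (sbm_pmf k \<pi> S \<rho> n)"
  shows
    "(\<forall>\<delta>>0. (\<lambda>n. measure M {\<omega> \<in> space M. \<forall>a<k. \<forall>b<k.
          \<bar>P_hat n (A n \<omega>) (Z n \<omega>) a b - \<rho> n * S a b\<bar>
            < sqrt (\<delta> * \<rho> n * ln (real n)) / real n}) \<longlonglongrightarrow> 1)
     \<and> (\<forall>\<alpha>>0. \<forall>\<delta>>0. \<delta> < s_min k S / 2 \<longrightarrow>
          (AE \<omega> in M. \<forall>\<^sub>F n in sequentially.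
             real n * \<rho> n > 4 * s_max k S / (\<alpha>\<^sup>2 * \<delta>\<^sup>2) \<longrightarrow>
             (\<forall>a<k. \<forall>b<k. \<forall>e\<in>F_set k n \<alpha>.
                \<bar>P_hat n (A n \<omega>) e a b
                   - P_R k n (\<lambda>c d. \<rho> n * S c d) (confusion n e (Z n \<omega>)) a b\<bar>
                  < \<delta> * \<rho> n)))"
proof -
  have k0: "k > 0" using k2 by simp
  define smax where "smax = s_max k S"
  have smax: "smax > 0" using S_le_smax[of 0 k 0 S] S_pos k0 by (force simp: smax_def)
  have ev_nr: "eventually (\<lambda>n. real n * \<rho> n \<ge> C) sequentially" for C
    using nrho by (simp add: filterlim_at_top)
  have ev_n: "eventually (\<lambda>n. real n \<ge> C) sequentially" for C
    using filterlim_real_sequentially by (simp add: filterlim_at_top)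
  have ev_n1: "eventually (\<lambda>n. n \<ge> (1::nat)) sequentially" by (rule eventually_ge_at_top)
  have ev_rpos: "eventually (\<lambda>n. \<rho> n > 0) sequentially"
    using ev_nr[of 1]
  proof eventually_elim
    case (elim n)
    show "\<rho> n > 0"
    proof (rule ccontr)
      assume "\<not> \<rho> n > 0"
      hence "real n * \<rho> n \<le> 0" by (simp add: mult_nonneg_nonpos)
      thus False using elim by linarith
    qed
  qed
  have ev_rs: "eventually (\<lambda>n. \<rho> n * smax \<le> 1) sequentially"
    using order_tendstoD(2)[OF rho_lim, of "1 / smax"] smax
  proof -
    have "0 < 1 / smax" using smax by simp
    from order_tendstoD(2)[OF rho_lim this] show ?thesis
  proof eventually_elim
    case (elim n)
    thus "\<rho> n * smax \<le> 1" using smax by (simp add: pos_less_divide_eq less_imp_le)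
  qed
  qed
  have meas_n: "(\<lambda>\<omega>. (Z n \<omega>, A n \<omega>)) \<in> M \<rightarrow>\<^sub>M count_space UNIV" for n using meas by blast
  have law_n: "distr M (count_space UNIV) (\<lambda>\<omega>. (Z n \<omega>, A n \<omega>)) = measure_pmf (sbm_pmf k \<pi> S \<rho> n)" for n
    using law by blast
  show ?thesis
  proof (intro conjI allI impI)
    fix \<delta> :: real assume \<delta>: "\<delta> > 0"
    define pm where "pm = Min (\<pi> ` {..<k})"
    have pm_in: "pm \<in> \<pi> ` {..<k}" unfolding pm_def using k0 by (intro Min_in) auto
    have pm0: "pm > 0" using pm_in pi_pos by auto
    have pm_le: "\<forall>a<k. \<pi> a \<ge> pm" unfolding pm_def by (auto intro: Min_le)
    define \<epsilon> where "\<epsilon> n = real k * real k * (2 * exp (- (\<delta> * ln (real n) * pm\<^sup>2 / (64 * s_max k S))))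
                       + (\<Sum>a<k. exp (- (real n * \<pi> a / 16)))" for n
    define G where "G n = measure M {\<omega> \<in> space M. \<forall>a<k. \<forall>b<k.
          \<bar>P_hat n (A n \<omega>) (Z n \<omega>) a b - \<rho> n * S a b\<bar> < sqrt (\<delta> * \<rho> n * ln (real n)) / real n}" for n
    have ev_ln: "eventually (\<lambda>n. \<delta> * ln (real n) \<le> 4 * smax\<^sup>2 * real n) sequentially"
    proof -
      have "4 * smax\<^sup>2 / \<delta> > 0" using smax \<delta> by simp
      from order_tendstoD(2)[OF lim_ln_over_n this] ev_n1
      show ?thesis
      proof eventually_elim
        case (elim n)
        hence "ln (real n) / real n < 4 * smax\<^sup>2 / \<delta>" by simp
        hence "ln (real n) < 4 * smax\<^sup>2 / \<delta> * real n" using elim by (simp add: pos_divide_less_eq)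
        hence "\<delta> * ln (real n) < \<delta> * (4 * smax\<^sup>2 / \<delta> * real n)" using \<delta> by (intro mult_strict_left_mono)
        thus ?case using \<delta> by simp
      qed
    qed
    have lower: "eventually (\<lambda>n. 1 - \<epsilon> n \<le> G n) sequentially"
      using ev_n1 ev_rpos ev_rs ev_n[of "4 / pm"] ev_nr[of 1] ev_ln
    proof eventually_elim
      case (elim n)
      have n0: "n > 0" using elim by simp
      have npm: "real n * pm / 2 \<ge> 2"
      proof -
        have "real n * pm \<ge> 4 / pm * pm" using elim pm0 by (intro mult_right_mono) auto
        thus ?thesis using pm0 by simp
      qed
      have lnn: "ln (real n) \<ge> 0" using elim by simp
      have lam: "sqrt (\<delta> * \<rho> n * ln (real n)) / real n / (4 * s_max k S * \<rho> n) \<le> 1/2"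
      proof -
        have "sqrt (\<delta> * \<rho> n * ln (real n)) / real n / (4 * smax * \<rho> n) \<le> 1/2"
          by (rule lam_arith) (use \<delta> smax n0 lnn elim in auto)
        thus ?thesis by (simp only: smax_def)
      qed
      have P: "measure_pmf.prob (sbm_pmf k \<pi> S \<rho> n)
           {x. \<not> (\<forall>a<k. \<forall>b<k. \<bar>P_hat n (snd x) (fst x) a b - \<rho> n * S a b\<bar>
                     < sqrt (\<delta> * \<rho> n * ln (real n)) / real n)} \<le> \<epsilon> n"
      proof -
        have r1: "\<rho> n > 0" using elim by simp
        have rs1: "\<rho> n * s_max k S \<le> 1" using elim by (simp add: smax_def)
        show ?thesis unfolding \<epsilon>_def by (rule part1_n[where \<rho>=\<rho> and n=n and k=k and \<pi>=\<pi> and S=S and pm=pm and \<delta>=\<delta>, OF pi_pos pi_sum S_sym S_pos k0 n0 r1 rs1 pm_le npm \<delta> lnn lam])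
      qed
      have "G n = measure_pmf.prob (sbm_pmf k \<pi> S \<rho> n)
           {x. (\<forall>a<k. \<forall>b<k. \<bar>P_hat n (snd x) (fst x) a b - \<rho> n * S a b\<bar>
                     < sqrt (\<delta> * \<rho> n * ln (real n)) / real n)}"
        unfolding G_def
        by (rule transfer_M(1)[OF meas_n law_n, where Q="\<lambda>z B. \<forall>a<k. \<forall>b<k. \<bar>P_hat n B z a b - \<rho> n * S a b\<bar>
                     < sqrt (\<delta> * \<rho> n * ln (real n)) / real n"])
      also have "\<dots> = 1 - measure_pmf.prob (sbm_pmf k \<pi> S \<rho> n)
           {x. \<not> (\<forall>a<k. \<forall>b<k. \<bar>P_hat n (snd x) (fst x) a b - \<rho> n * S a b\<bar>
                     < sqrt (\<delta> * \<rho> n * ln (real n)) / real n)}"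
        by (rule pmf_prob_neg)
      finally show ?case using P by linarith
    qed
    have upper: "eventually (\<lambda>n. G n \<le> 1) sequentially"
      unfolding G_def by (intro always_eventually allI prob_space.prob_le_1[OF M_prob])
    have eps0: "\<epsilon> \<longlonglongrightarrow> 0"
    proof -
      have L1: "(\<lambda>n. exp (- (\<delta> * ln (real n) * pm\<^sup>2 / (64 * s_max k S)))) \<longlonglongrightarrow> 0"
      proof -
        have c: "\<delta> * pm\<^sup>2 / (64 * s_max k S) > 0" using \<delta> pm0 smax by (simp add: smax_def)
        have f: "filterlim (\<lambda>n. ln (real n)) at_top sequentially"
          by (rule filterlim_compose[OF ln_at_top filterlim_real_sequentially])
        have "(\<lambda>n. exp (- (\<delta> * pm\<^sup>2 / (64 * s_max k S) * ln (real n)))) \<longlonglongrightarrow> 0"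
          by (rule exp_neg_lim[OF c f])
        thus ?thesis by (simp add: mult_ac)
      qed
      have L2: "(\<lambda>n. exp (- (real n * \<pi> a / 16))) \<longlonglongrightarrow> 0" if a: "a \<in> {..<k}" for a
      proof -
        have c: "\<pi> a / 16 > 0" using pi_pos a by simp
        have "(\<lambda>n. exp (- (\<pi> a / 16 * real n))) \<longlonglongrightarrow> 0"
          by (rule exp_neg_lim[OF c filterlim_real_sequentially])
        thus ?thesis by (simp add: mult_ac)
      qed
      have "(\<lambda>n. real k * real k * (2 * exp (- (\<delta> * ln (real n) * pm\<^sup>2 / (64 * s_max k S))))) \<longlonglongrightarrow> real k * real k * (2 * 0)"
        by (intro tendsto_intros L1)
      moreover have "(\<lambda>n. \<Sum>a<k. exp (- (real n * \<pi> a / 16))) \<longlonglongrightarrow> 0"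
        by (rule tendsto_null_sum) (rule L2)
      ultimately have "\<epsilon> \<longlonglongrightarrow> real k * real k * (2 * 0) + 0"
        unfolding \<epsilon>_def by (rule tendsto_add)
      thus ?thesis by simp
    qed
    have "(\<lambda>n. 1 - \<epsilon> n) \<longlonglongrightarrow> 1 - 0" by (intro tendsto_intros eps0)
    hence lo: "(\<lambda>n. 1 - \<epsilon> n) \<longlonglongrightarrow> 1" by simp
    have "G \<longlonglongrightarrow> 1" by (rule tendsto_sandwich[OF lower upper lo tendsto_const])
    thus "(\<lambda>n. measure M {\<omega> \<in> space M. \<forall>a<k. \<forall>b<k.
          \<bar>P_hat n (A n \<omega>) (Z n \<omega>) a b - \<rho> n * S a b\<bar>
            < sqrt (\<delta> * \<rho> n * ln (real n)) / real n}) \<longlonglongrightarrow> 1"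
      unfolding G_def .
  next
    fix \<alpha> \<delta> :: real assume \<alpha>: "\<alpha> > 0" and \<delta>: "\<delta> > 0" and "\<delta> < s_min k S / 2"
    define lam0 where "lam0 = min (1/2) (\<delta> / (4 * s_max k S))"
    define c0 where "c0 = lam0 * \<delta> * \<alpha>\<^sup>2 / 4"
    have lam0: "lam0 > 0" using \<delta> smax by (simp add: lam0_def smax_def)
    have c0: "c0 > 0" using lam0 \<delta> \<alpha> by (simp add: c0_def)
    have "eventually (\<lambda>n. n \<ge> 1 \<and> \<rho> n > 0 \<and> \<rho> n * smax \<le> 1 \<and> real n \<ge> 2 / \<alpha>
              \<and> real n * \<rho> n \<ge> (ln (real k) + 1) / c0) sequentially"
      using ev_n1 ev_rpos ev_rs ev_n[of "2 / \<alpha>"] ev_nr[of "(ln (real k) + 1) / c0"]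
      by eventually_elim blast
    then obtain N where N: "\<And>n. n \<ge> N \<Longrightarrow> n \<ge> 1 \<and> \<rho> n > 0 \<and> \<rho> n * smax \<le> 1 \<and> real n \<ge> 2 / \<alpha>
              \<and> real n * \<rho> n \<ge> (ln (real k) + 1) / c0"
      unfolding eventually_sequentially by blast
    define Q2 where "Q2 n z B = (\<exists>a<k. \<exists>b<k. \<exists>e\<in>F_set k n \<alpha>.
        \<bar>P_hat n B e a b - P_R k n (\<lambda>c d. \<rho> n * S c d) (confusion n e z) a b\<bar> \<ge> \<delta> * \<rho> n)" for n z B
    define Bad where "Bad n = (if N \<le> n then {\<omega> \<in> space M. Q2 n (Z n \<omega>) (A n \<omega>)} else {})" for n
    have Bad_sets: "Bad n \<in> sets M" for n
      unfolding Bad_def using transfer_M(2)[OF meas_n law_n, of "Q2 n"] by auto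
    have Bad_fin: "emeasure M (Bad n) < \<infinity>" for n
      using finite_measure.emeasure_finite[OF prob_space.finite_measure[OF M_prob]] by (simp add: less_top)
    have Bad_le: "measure M (Bad n) \<le> 2 * real k * real k * exp (- real n)" for n
    proof (cases "N \<le> n")
      case False thus ?thesis by (simp add: Bad_def)
    next
      case True
      note Nn = N[OF True]
      have n0: "n > 0" using Nn by simp
      have \<alpha>n: "\<alpha> * real n \<ge> 2"
      proof -
        have "\<alpha> * real n \<ge> \<alpha> * (2 / \<alpha>)" using Nn \<alpha> by (intro mult_left_mono) auto
        thus ?thesis using \<alpha> by simp
      qed
      have "measure M (Bad n) = measure_pmf.prob (sbm_pmf k \<pi> S \<rho> n) {x. Q2 n (fst x) (snd x)}"
        unfolding Bad_def using True transfer_M(1)[OF meas_n law_n, of "Q2 n"] by simp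
      also have "\<dots> \<le> real k * real k * real k ^ n * (2 * exp (- (lam0 * \<delta> * \<rho> n * (\<alpha> * real n)\<^sup>2 / 4)))"
      proof -
        have r1: "\<rho> n > 0" using Nn by simp
        have rs1: "\<rho> n * s_max k S \<le> 1" using Nn by (simp add: smax_def)
        show ?thesis unfolding Q2_def lam0_def by (rule part2_n[where \<rho>=\<rho> and n=n and k=k and \<pi>=\<pi> and S=S and \<alpha>=\<alpha> and \<delta>=\<delta>, OF pi_pos pi_sum S_sym S_pos k0 n0 r1 rs1 \<alpha>n \<delta>])
      qed
      also have "\<dots> = 2 * real k * real k * (real k ^ n * exp (- (lam0 * \<delta> * \<rho> n * (\<alpha> * real n)\<^sup>2 / 4)))"
        by (simp add: mult_ac)
      also have "\<dots> \<le> 2 * real k * real k * exp (- real n)"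
      proof (intro mult_left_mono kn_arith k0)
        have eq: "lam0 * \<delta> * \<rho> n * (\<alpha> * real n)\<^sup>2 / 4 = real n * (c0 * (real n * \<rho> n))"
          by (simp add: c0_def power2_eq_square algebra_simps)
        have "c0 * (real n * \<rho> n) \<ge> ln (real k) + 1"
          using Nn c0 by (simp add: pos_divide_le_eq mult.commute)
        hence "real n * (c0 * (real n * \<rho> n)) \<ge> real n * (ln (real k) + 1)"
          by (intro mult_left_mono) auto
        thus "real n * (ln (real k) + 1) \<le> lam0 * \<delta> * \<rho> n * (\<alpha> * real n)\<^sup>2 / 4" unfolding eq .
      qed simp
      finally show ?thesis .
    qed
    have summ: "summable (\<lambda>n. measure M (Bad n))"
    proof (rule summable_comparison_test[where g="\<lambda>n. 2 * real k * real k * exp (- 1) ^ n"])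
      show "\<exists>N. \<forall>n\<ge>N. norm (measure M (Bad n)) \<le> 2 * real k * real k * exp (- 1) ^ n"
        using Bad_le by (auto simp: exp_of_nat_mult[symmetric])
      show "summable (\<lambda>n. 2 * real k * real k * exp (- 1) ^ n)"
        by (intro summable_mult summable_geometric) simp
    qed
    have BC: "AE x in M. eventually (\<lambda>n. x \<in> space M - Bad n) sequentially"
      by (rule borel_cantelli_AE1[OF Bad_sets Bad_fin summ])
    show "AE \<omega> in M. \<forall>\<^sub>F n in sequentially.
             real n * \<rho> n > 4 * s_max k S / (\<alpha>\<^sup>2 * \<delta>\<^sup>2) \<longrightarrow>
             (\<forall>a<k. \<forall>b<k. \<forall>e\<in>F_set k n \<alpha>.
                \<bar>P_hat n (A n \<omega>) e a b
                   - P_R k n (\<lambda>c d. \<rho> n * S c d) (confusion n e (Z n \<omega>)) a b\<bar>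
                  < \<delta> * \<rho> n)"
      using BC
    proof (rule eventually_mono)
      fix x assume ev: "eventually (\<lambda>n. x \<in> space M - Bad n) sequentially"
      show "\<forall>\<^sub>F n in sequentially.
             real n * \<rho> n > 4 * s_max k S / (\<alpha>\<^sup>2 * \<delta>\<^sup>2) \<longrightarrow>
             (\<forall>a<k. \<forall>b<k. \<forall>e\<in>F_set k n \<alpha>.
                \<bar>P_hat n (A n x) e a b
                   - P_R k n (\<lambda>c d. \<rho> n * S c d) (confusion n e (Z n x)) a b\<bar>
                  < \<delta> * \<rho> n)"
        using ev eventually_ge_at_top[of N]
      proof eventually_elim
        case (elim n)
        hence "\<not> Q2 n (Z n x) (A n x)" by (simp add: Bad_def)
        thus ?case by (auto simp: Q2_def not_le)
      qed
    qed
  qed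
qed

end
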